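(* In the standing setup below, let $\mathcal F$ be a facet of $\mathcal S$ and $\delta,\epsilon>0$. Then there exists $N$ such that for every $i>N$ and every $y\in B_\delta\cap X_{\mathcal F,w_i}$, there is a unique point $z\in X^\circ_{\mathcal A,w_i}$ with $\pi_{\mathcal F}(z)=y$, and it satisfies $d(y,z)<\epsilon$.
   Context: Notation: $\mathcal A\subset\mathbb{R}^d$ finite, affinely spanning $\mathbb{R}^d$; $\Delta^{\mathcal A}=\{z\in\mathbb{R}^{\mathcal A}_{\ge0}\mid\sum z_{\mathbf a}=1\}$ with homogeneous coordinates and $\ell_1$ metric $d(y,z)=\sum_{\mathbf a}|y_{\mathbf a}-z_{\mathbf a}|$; $\Delta^{\mathcal F}$ the face where $z_{\mathbf a}=0$ for $\mathbf a\notin\mathcal F$. $\pi_{\mathcal F}$ maps $z$ with some $z_{\mathbf f}\neq0$, $\mathbf f\in\mathcal F$, to the point of $\Delta^{\mathcal F}$ obtained by setting coordinates outside $\mathcal F$ to $0$ and rescaling. For $w\in\mathbb{R}^{\mathcal A}_>$ and $\mathcal F\subset\mathcal A$, $X^\circ_{\mathcal F,w}=\{[w_{\mathbf f}x^{\mathbf f}\mid\mathbf f\in\mathcal F]\mid x\in\mathbb{R}^d_>\}\subset\Delta^{\mathcal F}$, $x^{\mathbf a}=\prod_j\exp(\mathbf a_j\log x_j)$, and $X_{\mathcal F,w}$ is its closure. $B_\delta=\{y\in\Delta^{\mathcal F}\mid y_{\mathbf f}\ge\delta\ \forall\mathbf f\in\mathcal F\}$. For $\lambda\in\mathbb{R}^{\mathcal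 A}$, $\mathcal S_\lambda$ is the regular subdivision whose faces are the sets $\{\mathbf a\mid(\mathbf a,\lambda(\mathbf a))\in F\}$, $F$ an upper face (outward normal with positive last coordinate) of $\mathrm{conv}\{(\mathbf a,\lambda(\mathbf a))\}$; facets are maximal faces (with $d$-dimensional convex hull). The secondary fan $\Sigma_{\mathcal A}$ consists of the closures of the sets $\{\lambda\mid\mathcal S_\lambda=\mathcal S\}$; $\mathcal S_\sigma$ is the subdivision of the cone $\sigma$. A sequence in a cone $\tau$ is $\sigma$-bounded if $\{\psi(v_i)\}$ is bounded for every linear $\psi$ vanishing on the face $\sigma$. Standing setup: $\{w_i\}\subset\mathbb{R}^{\mathcal A}_>$, $v_i=\mathrm{Log}(w_i)$; there is a cone $\tau\in\Sigma_{\mathcal A}$ containing all $v_i$ with only finitely many $v_i$ in any proper face of $\tau$; a face $\sigma$ of $\tau$ is the minimum face of boundedness (smallest face for which the sequence is bounded) of every subsequence of $\{v_i\}$; $v_i=u_i+\bar v_i$ with $u_i\in\sigma$, $\bar v_i\to v$; $w=\mathrm{Exp}(v)$; $\mathcal S=\mathcal S_\sigma$. *)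

theory Defs
  imports "HOL-Analysis.Analysis"
begin

text \<open>The finite point configuration \<open>\<A> \<subseteq> \<real>^d\<close> is given as an injective
  map \<open>pts :: 'a \<Rightarrow> real^'d\<close> from a finite index type \<open>'a\<close>; thus \<open>\<real>^\<A>\<close> is \<open>real^'a\<close>
  and subsets \<open>\<F> \<subseteq> \<A>\<close> are sets of indices \<open>'a set\<close>.\<close>

definition simplex_face :: "'a::finite set \<Rightarrow> (real^'a) set" where
  "simplex_face F = {z. (\<forall>a. 0 \<le> z$a) \<and> (\<Sum>a\<in>UNIV. z$a) = 1 \<and> (\<forall>a. a \<notin> F \<longrightarrow> z$a = 0)}"

definition l1dist :: "real^'a::finite \<Rightarrow> real^'a \<Rightarrow> real" where
  "l1dist y z = (\<Sum>a\<in>UNIV. \<bar>y$a - z$a\<bar>)"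

definition proj_face :: "'a::finite set \<Rightarrow> real^'a \<Rightarrow> real^'a" where
  "proj_face F z = (\<chi> a. if a \<in> F then z$a / (\<Sum>f\<in>F. z$f) else 0)"

definition monom :: "('a \<Rightarrow> real^'d::finite) \<Rightarrow> real^'d \<Rightarrow> 'a \<Rightarrow> real" where
  "monom pts x a = (\<Prod>j\<in>UNIV. exp ((pts a)$j * ln (x$j)))"

definition Xo :: "('a::finite \<Rightarrow> real^'d::finite) \<Rightarrow> 'a set \<Rightarrow> real^'a \<Rightarrow> (real^'a) set" where
  "Xo pts F w = {(\<chi> a. if a \<in> F then w$a * monom pts x a / (\<Sum>f\<in>F. w$f * monom pts x f) else 0)
                 | x. \<forall>j. 0 < x$j}"

definition Xcl :: "('a::finite \<Rightarrow> real^'d::finite) \<Rightarrow> 'a set \<Rightarrow> real^'a \<Rightarrow> (real^'a) set" where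
  "Xcl pts F w = closure (Xo pts F w)"

definition Bdelta :: "'a::finite set \<Rightarrow> real \<Rightarrow> (real^'a) set" where
  "Bdelta F \<delta> = {y \<in> simplex_face F. \<forall>f\<in>F. \<delta> \<le> y$f}"

text \<open>Upper faces of the lifted polytope \<open>conv{(a,\<lambda>(a))}\<close>: the faces having an outward
  normal with positive last coordinate (faces of polytopes are exposed, so a face with
  outward normal n is the set of maximisers of n).\<close>
definition lifted_polytope :: "('a::finite \<Rightarrow> real^'d::finite) \<Rightarrow> real^'a \<Rightarrow> ((real^'d) \<times> real) set" where
  "lifted_polytope pts lam = convex hull ((\<lambda>a. (pts a, lam$a)) ` UNIV)"

definition upper_faces :: "('a::finite \<Rightarrow> real^'d::finite) \<Rightarrow> real^'a \<Rightarrow> ((real^'d) \<times> real) set set" where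
  "upper_faces pts lam =
     {{p \<in> lifted_polytope pts lam. \<forall>q \<in> lifted_polytope pts lam. inner q n \<le> inner p n}
      | n. 0 < snd n}"

definition reg_subdiv :: "('a::finite \<Rightarrow> real^'d::finite) \<Rightarrow> real^'a \<Rightarrow> 'a set set" where
  "reg_subdiv pts lam = {{a. (pts a, lam$a) \<in> G} | G. G \<in> upper_faces pts lam}"

definition is_facet :: "('a::finite \<Rightarrow> real^'d::finite) \<Rightarrow> 'a set set \<Rightarrow> 'a set \<Rightarrow> bool" where
  "is_facet pts S F \<longleftrightarrow> F \<in> S \<and> (\<forall>G\<in>S. F \<subseteq> G \<longrightarrow> G = F)
      \<and> aff_dim (convex hull (pts ` F)) = int CARD('d)"

definition secondary_fan :: "('a::finite \<Rightarrow> real^'d::finite) \<Rightarrow> (real^'a) set set" where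
  "secondary_fan pts = {closure {mu. reg_subdiv pts mu = reg_subdiv pts lam} | lam. True}"

definition cone_subdiv :: "('a::finite \<Rightarrow> real^'d::finite) \<Rightarrow> (real^'a) set \<Rightarrow> 'a set set" where
  "cone_subdiv pts \<sigma> = (THE S. closure {mu. reg_subdiv pts mu = S} = \<sigma>)"

definition cone_face :: "(real^'a::finite) set \<Rightarrow> (real^'a) set \<Rightarrow> bool" where
  "cone_face \<sigma> \<tau> \<longleftrightarrow> \<sigma> face_of \<tau> \<and> \<sigma> \<noteq> {}"

definition face_bounded :: "(real^'a::finite) set \<Rightarrow> (nat \<Rightarrow> real^'a) \<Rightarrow> bool" where
  "face_bounded \<sigma> s \<longleftrightarrow>
     (\<forall>\<psi> :: real^'a \<Rightarrow> real. linear \<psi> \<and> (\<forall>x\<in>\<sigma>. \<psi> x = 0) \<longrightarrow> bounded (range (\<lambda>i. \<psi> (s i))))"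

definition min_face_bdd :: "(real^'a::finite) set \<Rightarrow> (real^'a) set \<Rightarrow> (nat \<Rightarrow> real^'a) \<Rightarrow> bool" where
  "min_face_bdd \<tau> \<sigma> s \<longleftrightarrow> cone_face \<sigma> \<tau> \<and> face_bounded \<sigma> s \<and>
     (\<forall>\<sigma>'. cone_face \<sigma>' \<tau> \<and> face_bounded \<sigma>' s \<longrightarrow> \<sigma> \<subseteq> \<sigma>')"

end

theory Submission
  imports Defs
begin

definition valid :: "('a::finite \<Rightarrow> real^'d::finite) \<Rightarrow> real^'a \<Rightarrow> real^'d \<Rightarrow> real \<Rightarrow> bool" where
  "valid pts \<mu> c b \<longleftrightarrow> (\<forall>a. \<mu>$a \<le> c \<bullet> pts a + b)"

definition tset :: "('a::finite \<Rightarrow> real^'d::finite) \<Rightarrow> real^'a \<Rightarrow> real^'d \<Rightarrow> real \<Rightarrow> 'a set" where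
  "tset pts \<mu> c b = {a. \<mu>$a = c \<bullet> pts a + b}"

lemma hull_bound:
  fixes n :: "'b::real_inner"
  assumes "\<And>x. x \<in> S \<Longrightarrow> n \<bullet> x \<le> K"
  shows "\<forall>q\<in>convex hull S. n \<bullet> q \<le> K"
proof -
  have "convex hull S \<subseteq> {x. n \<bullet> x \<le> K}"
    by (rule hull_minimal) (use assms convex_halfspace_le in auto)
  then show ?thesis by auto
qed

lemma E_char:
  fixes pts :: "'a::finite \<Rightarrow> real^'d::finite"
  shows "reg_subdiv pts \<mu> = {tset pts \<mu> c b | c b. valid pts \<mu> c b \<and> tset pts \<mu> c b \<noteq> {}}"
proof (intro set_eqI iffI)
  fix E assume "E \<in> reg_subdiv pts \<mu>"
  then obtain n where n: "0 < snd n" and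
    E: "E = {a. (pts a, \<mu>$a) \<in> {p \<in> lifted_polytope pts \<mu>. \<forall>q \<in> lifted_polytope pts \<mu>. inner q n \<le> inner p n}}"
    unfolding reg_subdiv_def upper_faces_def by blast
  define P where "P = lifted_polytope pts \<mu>"
  define lift where "lift a = (pts a, \<mu>$a)" for a
  obtain n1 t where nt: "n = (n1, t)" by (cases n)
  have t: "0 < t" using n nt by simp
  define m where "m = Max (range (\<lambda>a. n \<bullet> lift a))"
  have le_m: "n \<bullet> lift a \<le> m" for a unfolding m_def by (rule Max_ge) auto
  have "m \<in> range (\<lambda>a. n \<bullet> lift a)" unfolding m_def by (rule Max_in) auto
  then obtain a0 where a0: "n \<bullet> lift a0 = m" by auto
  have liftP: "lift a \<in> P" for a unfolding P_def lifted_polytope_def lift_def by (rule hull_inc) auto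
  have Pm: "\<forall>q\<in>P. n \<bullet> q \<le> m" unfolding P_def lifted_polytope_def
    by (rule hull_bound) (use le_m lift_def in auto)
  have memE: "a \<in> E \<longleftrightarrow> n \<bullet> lift a = m" for a
  proof -
    have "a \<in> E \<longleftrightarrow> (\<forall>q\<in>P. n \<bullet> q \<le> n \<bullet> lift a)"
      using liftP unfolding E P_def lift_def by (auto simp: inner_commute)
    also have "\<dots> \<longleftrightarrow> n \<bullet> lift a = m"
      using Pm le_m[of a] a0 liftP[of a0] by (metis order.antisym order.refl)
    finally show ?thesis .
  qed
  define c where "c = -(1/t) *\<^sub>R n1"
  define b where "b = m / t"
  have key: "n \<bullet> lift a - m = t * (\<mu>$a - (c \<bullet> pts a + b))" for a
    using t by (simp add: nt lift_def c_def b_def field_simps inner_commute)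
  have "valid pts \<mu> c b" unfolding valid_def
  proof
    fix a have "t * (\<mu>$a - (c \<bullet> pts a + b)) \<le> 0" using le_m[of a] key[of a] by simp
    then show "\<mu>$a \<le> c \<bullet> pts a + b" using t by (simp add: mult_le_0_iff)
  qed
  moreover have "E = tset pts \<mu> c b" unfolding tset_def
  proof (intro set_eqI)
    fix a show "a \<in> E \<longleftrightarrow> a \<in> {a. \<mu>$a = c \<bullet> pts a + b}"
    proof -
      have "a \<in> E \<longleftrightarrow> t * (\<mu>$a - (c \<bullet> pts a + b)) = 0" using memE[of a] key[of a] by (metis eq_iff_diff_eq_0)
      then show ?thesis using t by simp
    qed
  qed
  moreover have "a0 \<in> E" using memE a0 by auto
  ultimately show "E \<in> {tset pts \<mu> c b | c b. valid pts \<mu> c b \<and> tset pts \<mu> c b \<noteq> {}}" by blast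
next
  fix E assume "E \<in> {tset pts \<mu> c b | c b. valid pts \<mu> c b \<and> tset pts \<mu> c b \<noteq> {}}"
  then obtain c b where v: "valid pts \<mu> c b" and E: "E = tset pts \<mu> c b" and ne: "E \<noteq> {}" by blast
  define n where "n = (- c, 1::real)"
  define P where "P = lifted_polytope pts \<mu>"
  define lift where "lift a = (pts a, \<mu>$a)" for a
  have key: "n \<bullet> lift a = \<mu>$a - c \<bullet> pts a" for a by (simp add: n_def lift_def)
  have le_b: "n \<bullet> lift a \<le> b" for a using v key unfolding valid_def by (smt (verit))
  have liftP: "lift a \<in> P" for a unfolding P_def lifted_polytope_def lift_def by (rule hull_inc) auto
  have Pb: "\<forall>q\<in>P. n \<bullet> q \<le> b" unfolding P_def lifted_polytope_def
    by (rule hull_bound) (use le_b lift_def in auto)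
  obtain a0 where a0: "a0 \<in> E" using ne by auto
  have a0b: "n \<bullet> lift a0 = b" using a0 E key unfolding tset_def by auto
  have "E = {a. lift a \<in> {p \<in> P. \<forall>q \<in> P. inner q n \<le> inner p n}}"
  proof (intro set_eqI iffI)
    fix a assume "a \<in> E"
    then have "n \<bullet> lift a = b" using E key unfolding tset_def by auto
    then show "a \<in> {a. lift a \<in> {p \<in> P. \<forall>q \<in> P. inner q n \<le> inner p n}}"
      using Pb liftP by (auto simp: inner_commute)
  next
    fix a assume "a \<in> {a. lift a \<in> {p \<in> P. \<forall>q \<in> P. inner q n \<le> inner p n}}"
    then have "n \<bullet> lift a0 \<le> n \<bullet> lift a" using liftP by (auto simp: inner_commute)
    then have "n \<bullet> lift a = b" using a0b le_b[of a] by auto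
    then show "a \<in> E" using E key unfolding tset_def by auto
  qed
  moreover have "0 < snd n" by (simp add: n_def)
  ultimately show "E \<in> reg_subdiv pts \<mu>"
    unfolding reg_subdiv_def upper_faces_def P_def lift_def by blast
qed


definition spans :: "('a::finite \<Rightarrow> real^'d::finite) \<Rightarrow> 'a set \<Rightarrow> bool" where
  "spans pts F \<longleftrightarrow> affine hull (pts ` F) = UNIV"

definition fullcell :: "('a::finite \<Rightarrow> real^'d::finite) \<Rightarrow> real^'a \<Rightarrow> 'a set \<Rightarrow> bool" where
  "fullcell pts \<mu> F \<longleftrightarrow> (\<exists>c b. valid pts \<mu> c b \<and> F = tset pts \<mu> c b \<and> spans pts F)"

lemma spans_rep:
  fixes pts :: "'a::finite \<Rightarrow> real^'d::finite"
  assumes "inj pts" "spans pts F"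
  shows "\<exists>u. sum u F = 1 \<and> (\<Sum>f\<in>F. u f *\<^sub>R pts f) = x"
proof -
  have "x \<in> affine hull (pts ` F)" using assms(2) by (simp add: spans_def)
  then obtain v where v: "sum v (pts ` F) = 1" "(\<Sum>y\<in>pts ` F. v y *\<^sub>R y) = x"
    by (auto simp: affine_hull_finite)
  have inj: "inj_on pts F" using assms(1) by (simp add: inj_on_def inj_def)
  show ?thesis
    by (rule exI[of _ "v \<circ> pts"]) (use v inj in \<open>simp add: sum.reindex\<close>)
qed

lemma aff_comb:
  fixes pts :: "'a \<Rightarrow> real^'d::finite"
  assumes "sum u F = 1"
  shows "c \<bullet> (\<Sum>f\<in>F. u f *\<^sub>R pts f) + b = (\<Sum>f\<in>F. u f * (c \<bullet> pts f + b))"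
proof -
  have "(\<Sum>f\<in>F. u f * (c \<bullet> pts f + b)) = (\<Sum>f\<in>F. u f * (c \<bullet> pts f)) + (\<Sum>f\<in>F. u f) * b"
    by (simp add: distrib_left sum.distrib sum_distrib_right)
  then show ?thesis using assms by (simp add: inner_sum_right)
qed

lemma agree:
  fixes pts :: "'a::finite \<Rightarrow> real^'d::finite"
  assumes "inj pts" "spans pts F" "\<And>f. f \<in> F \<Longrightarrow> c \<bullet> pts f + b = c' \<bullet> pts f + b'"
  shows "c \<bullet> x + b = c' \<bullet> x + b'"
proof -
  obtain u where u: "sum u F = 1" "(\<Sum>f\<in>F. u f *\<^sub>R pts f) = x" using spans_rep[OF assms(1,2)] by blast
  have "c \<bullet> x + b = (\<Sum>f\<in>F. u f * (c \<bullet> pts f + b))" using aff_comb[OF u(1)] u(2) by metis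
  also have "\<dots> = (\<Sum>f\<in>F. u f * (c' \<bullet> pts f + b'))" using assms(3) by simp
  also have "\<dots> = c' \<bullet> x + b'" using aff_comb[OF u(1)] u(2) by metis
  finally show ?thesis .
qed

lemma spans_aff_dim:
  fixes pts :: "'a::finite \<Rightarrow> real^'d::finite"
  shows "aff_dim (convex hull (pts ` F)) = int CARD('d) \<longleftrightarrow> spans pts F"
  unfolding spans_def aff_dim_convex_hull
  using aff_dim_eq_full[of "pts ` F"] by simp

lemma spans_nonempty: "spans pts F \<Longrightarrow> F \<noteq> {}"
  unfolding spans_def by auto

lemma facet_iff:
  fixes pts :: "'a::finite \<Rightarrow> real^'d::finite"
  assumes "inj pts"
  shows "is_facet pts (reg_subdiv pts \<mu>) F \<longleftrightarrow> fullcell pts \<mu> F"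
proof
  assume "is_facet pts (reg_subdiv pts \<mu>) F"
  then show "fullcell pts \<mu> F"
    unfolding is_facet_def fullcell_def E_char spans_aff_dim by blast
next
  assume "fullcell pts \<mu> F"
  then obtain c b where v: "valid pts \<mu> c b" and F: "F = tset pts \<mu> c b" and sp: "spans pts F"
    unfolding fullcell_def by blast
  have mem: "F \<in> reg_subdiv pts \<mu>" unfolding E_char using v F spans_nonempty[OF sp] by blast
  have max: "G = F" if "G \<in> reg_subdiv pts \<mu>" "F \<subseteq> G" for G
  proof -
    have "G \<in> {tset pts \<mu> c b | c b. valid pts \<mu> c b \<and> tset pts \<mu> c b \<noteq> {}}"
      using that(1) E_char[of pts \<mu>] by blast
    then obtain c' b' where v': "valid pts \<mu> c' b'" and G: "G = tset pts \<mu> c' b'"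
      by blast
    have "c' \<bullet> x + b' = c \<bullet> x + b" for x
      by (rule agree[OF assms sp]) (use that(2) F G in \<open>auto simp: tset_def\<close>)
    then show "G = F" using F G by (simp add: tset_def)
  qed
  show "is_facet pts (reg_subdiv pts \<mu>) F"
    unfolding is_facet_def spans_aff_dim using mem max sp by blast
qed

lemma hull_le:
  fixes pts :: "'a \<Rightarrow> real^'d::finite"
  assumes "\<And>f. f \<in> F \<Longrightarrow> c \<bullet> pts f + b \<le> c' \<bullet> pts f + b'"
    and "y \<in> convex hull (pts ` F)"
  shows "c \<bullet> y + b \<le> c' \<bullet> y + b'"
proof -
  have "\<forall>q\<in>convex hull (pts ` F). (c - c') \<bullet> q \<le> b' - b"
  proof (rule hull_bound)
    fix q assume "q \<in> pts ` F"
    then obtain f where f: "f \<in> F" "q = pts f" by auto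
    show "(c - c') \<bullet> q \<le> b' - b" using assms(1)[OF f(1)] f(2) by (simp add: inner_diff_left)
  qed
  then show ?thesis using assms(2) by (auto simp: inner_diff_left)
qed

lemma avg_aff:
  fixes pts :: "'a \<Rightarrow> real^'d::finite"
  assumes "finite G" "G \<noteq> {}"
  shows "c \<bullet> ((1 / real (card G)) *\<^sub>R (\<Sum>g\<in>G. pts g)) + b = (1 / real (card G)) * (\<Sum>g\<in>G. c \<bullet> pts g + b)"
proof -
  have s: "sum (\<lambda>g. 1 / real (card G)) G = 1" using assms by simp
  have "c \<bullet> ((1 / real (card G)) *\<^sub>R (\<Sum>g\<in>G. pts g)) + b = c \<bullet> (\<Sum>g\<in>G. (1 / real (card G)) *\<^sub>R pts g) + b"
    by (simp add: scaleR_sum_right)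
  also have "\<dots> = (\<Sum>g\<in>G. (1 / real (card G)) * (c \<bullet> pts g + b))" by (rule aff_comb[OF s])
  also have "\<dots> = (1 / real (card G)) * (\<Sum>g\<in>G. c \<bullet> pts g + b)" by (simp add: sum_distrib_left)
  finally show ?thesis .
qed

lemma BA:
  fixes pts :: "'a::finite \<Rightarrow> real^'d::finite"
  assumes v: "valid pts \<nu> c b" and v': "valid pts \<nu> c' b'"
    and G: "G \<subseteq> tset pts \<nu> c' b'" "G \<noteq> {}"
    and x: "x = (1 / real (card G)) *\<^sub>R (\<Sum>g\<in>G. pts g)"
    and xF: "x \<in> convex hull (pts ` F)" and F: "F \<subseteq> tset pts \<nu> c b"
  shows "G \<subseteq> tset pts \<nu> c b"
proof -
  have fin: "finite G" by simp
  have cardpos: "0 < real (card G)" using G(2) by (simp add: card_gt_0_iff)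
  have "c \<bullet> x + b \<le> c' \<bullet> x + b'"
  proof (rule hull_le[OF _ xF])
    fix f assume "f \<in> F"
    then have "\<nu>$f = c \<bullet> pts f + b" using F by (auto simp: tset_def)
    moreover have "\<nu>$f \<le> c' \<bullet> pts f + b'" using v' by (simp add: valid_def)
    ultimately show "c \<bullet> pts f + b \<le> c' \<bullet> pts f + b'" by linarith
  qed
  also have "c' \<bullet> x + b' = (1 / real (card G)) * (\<Sum>g\<in>G. c' \<bullet> pts g + b')"
    unfolding x by (rule avg_aff[OF fin G(2)])
  also have "(\<Sum>g\<in>G. c' \<bullet> pts g + b') = (\<Sum>g\<in>G. \<nu>$g)"
    using G(1) by (intro sum.cong) (auto simp: tset_def)
  finally have "c \<bullet> x + b \<le> (1 / real (card G)) * (\<Sum>g\<in>G. \<nu>$g)" .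
  moreover have "c \<bullet> x + b = (1 / real (card G)) * (\<Sum>g\<in>G. c \<bullet> pts g + b)"
    unfolding x by (rule avg_aff[OF fin G(2)])
  ultimately have "(1 / real (card G)) * (\<Sum>g\<in>G. c \<bullet> pts g + b) \<le> (1 / real (card G)) * (\<Sum>g\<in>G. \<nu>$g)"
    by linarith
  then have "(\<Sum>g\<in>G. c \<bullet> pts g + b) \<le> (\<Sum>g\<in>G. \<nu>$g)"
    by (rule mult_left_le_imp_le) (use cardpos in simp)
  then have "(\<Sum>g\<in>G. (c \<bullet> pts g + b) - \<nu>$g) \<le> 0" by (simp add: sum_subtractf)
  moreover have nn: "\<forall>g\<in>G. 0 \<le> (c \<bullet> pts g + b) - \<nu>$g" using v by (simp add: valid_def)
  moreover have "0 \<le> (\<Sum>g\<in>G. (c \<bullet> pts g + b) - \<nu>$g)" using nn by (simp add: sum_nonneg)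
  ultimately have "(\<Sum>g\<in>G. (c \<bullet> pts g + b) - \<nu>$g) = 0" by linarith
  then have "\<forall>g\<in>G. (c \<bullet> pts g + b) - \<nu>$g = 0" using nn by (simp add: sum_nonneg_eq_0_iff[OF fin])
  then show ?thesis by (auto simp: tset_def)
qed

lemma small_delta:
  fixes g h :: "'b \<Rightarrow> real"
  assumes "finite A" "\<And>a. a \<in> A \<Longrightarrow> 0 < g a"
  shows "\<exists>\<delta>>0. \<forall>a\<in>A. \<delta> * \<bar>h a\<bar> < g a"
proof -
  define \<delta> where "\<delta> = Min (insert 1 ((\<lambda>a. g a / (\<bar>h a\<bar> + 1)) ` A))"
  have pos: "0 < \<delta>" unfolding \<delta>_def using assms by (subst Min_gr_iff) auto
  have "\<delta> * \<bar>h a\<bar> < g a" if "a \<in> A" for a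
  proof -
    have le: "\<delta> \<le> g a / (\<bar>h a\<bar> + 1)" unfolding \<delta>_def using assms(1) that by (intro Min_le) auto
    have "\<delta> * \<bar>h a\<bar> \<le> g a / (\<bar>h a\<bar> + 1) * \<bar>h a\<bar>" by (rule mult_right_mono[OF le]) simp
    also have "\<dots> < g a" using assms(2)[OF that]
      by (simp add: field_simps)
    finally show ?thesis .
  qed
  then show ?thesis using pos by blast
qed


lemma LP_interior:
  fixes pts :: "'a::finite \<Rightarrow> real^'d::finite"
  assumes x: "x \<in> interior (convex hull (range pts))"
  shows "\<exists>c b. valid pts \<mu> c b \<and> x \<in> convex hull (pts ` tset pts \<mu> c b)"
proof -
  obtain e where e: "e > 0" "cball x e \<subseteq> convex hull (range pts)"
    using x mem_interior_cball by blast
  define M0 where "M0 = Max (range (\<lambda>a. \<mu>$a))"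
  define m0 where "m0 = Min (range (\<lambda>a. \<mu>$a))"
  have M0: "\<mu>$a \<le> M0" for a unfolding M0_def by (rule Max_ge) auto
  have m0: "m0 \<le> \<mu>$a" for a unfolding m0_def by (rule Min_le) auto
  define K where "K = {p :: (real^'d) \<times> real. valid pts \<mu> (fst p) (snd p) \<and> fst p \<bullet> x + snd p \<le> M0}"
  have K0: "(0, M0) \<in> K" unfolding K_def valid_def using M0 by simp
  have "closed K"
  proof -
    have "K = (\<Inter>a. {p. \<mu>$a \<le> fst p \<bullet> pts a + snd p}) \<inter> {p. fst p \<bullet> x + snd p \<le> M0}"
      unfolding K_def valid_def by auto
    moreover have "closed {p :: (real^'d) \<times> real. \<mu>$a \<le> fst p \<bullet> pts a + snd p}" for a
      by (rule closed_Collect_le) (auto intro!: continuous_intros)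
    moreover have "closed {p :: (real^'d) \<times> real. fst p \<bullet> x + snd p \<le> M0}"
      by (rule closed_Collect_le) (auto intro!: continuous_intros)
    ultimately show ?thesis by auto
  qed
  have low: "m0 \<le> c \<bullet> y + b" if "valid pts \<mu> c b" "y \<in> convex hull (range pts)" for c b y
  proof -
    have "\<forall>q\<in>convex hull (range pts). (-c) \<bullet> q \<le> b - m0"
    proof (rule hull_bound)
      fix q assume "q \<in> range pts"
      then obtain a where "q = pts a" by auto
      moreover have "\<mu>$a \<le> c \<bullet> pts a + b" using that(1) by (simp add: valid_def)
      ultimately show "(-c) \<bullet> q \<le> b - m0" using m0[of a] by simp
    qed
    then have "(-c) \<bullet> y \<le> b - m0" using that(2) by blast
    then show ?thesis by simp
  qed
  define R1 where "R1 = (M0 - m0) / e"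
  define R2 where "R2 = \<bar>M0\<bar> + \<bar>m0\<bar> + R1 * norm x"
  have nc: "norm c \<le> R1" if "(c, b) \<in> K" for c b
  proof (cases "c = 0")
    case True then show ?thesis using m0[of undefined] M0[of undefined] e unfolding R1_def by simp
  next
    case False
    define y where "y = x - (e / norm c) *\<^sub>R c"
    have "y \<in> cball x e" using e False by (simp add: y_def dist_norm)
    then have "m0 \<le> c \<bullet> y + b" using low that e(2) unfolding K_def by auto
    also have "c \<bullet> y = c \<bullet> x - e * norm c"
      using False by (simp add: y_def inner_diff_right power2_norm_eq_inner[symmetric] power2_eq_square)
    finally have "e * norm c \<le> M0 - m0" using that unfolding K_def by auto
    then show ?thesis unfolding R1_def using e by (simp add: field_simps)
  qed
  have nb: "\<bar>b\<bar> \<le> R2" if "(c, b) \<in> K" for c b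
  proof -
    have xin: "x \<in> convex hull (range pts)" using e by auto
    have "m0 \<le> c \<bullet> x + b" using low that xin unfolding K_def by auto
    moreover have "c \<bullet> x + b \<le> M0" using that unfolding K_def by auto
    moreover have "\<bar>c \<bullet> x\<bar> \<le> R1 * norm x"
    proof -
      have "\<bar>c \<bullet> x\<bar> \<le> norm c * norm x" by (rule Cauchy_Schwarz_ineq2)
      also have "\<dots> \<le> R1 * norm x" by (rule mult_right_mono[OF nc[OF that]]) simp
      finally show ?thesis .
    qed
    ultimately show ?thesis unfolding R2_def by linarith
  qed
  have "K \<subseteq> cball 0 R1 \<times> cball 0 R2"
    using nc nb by (auto simp: mem_cball_0)
  then have "bounded K" using bounded_Times[OF bounded_cball bounded_cball] bounded_subset by blast
  then have "compact K" using \<open>closed K\<close> by (simp add: compact_eq_bounded_closed)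
  then obtain p where pK: "p \<in> K" and pmin: "\<forall>q\<in>K. fst p \<bullet> x + snd p \<le> fst q \<bullet> x + snd q"
  proof -
    have "continuous_on K (\<lambda>q. fst q \<bullet> x + snd q)" by (auto intro!: continuous_intros)
    moreover have "K \<noteq> {}" using K0 by auto
    ultimately show ?thesis using continuous_attains_inf[OF \<open>compact K\<close>] that by blast
  qed
  obtain c b where p: "p = (c, b)" by (cases p)
  have vcb: "valid pts \<mu> c b" using pK p unfolding K_def by auto
  define T where "T = tset pts \<mu> c b"
  have "x \<in> convex hull (pts ` T)"
  proof (rule ccontr)
    assume nx: "x \<notin> convex hull (pts ` T)"
    have "closed (convex hull (pts ` T))" by (rule compact_imp_closed, rule compact_convex_hull, rule finite_imp_compact) simp
    then obtain a0 \<beta> where sep: "a0 \<bullet> x < \<beta>" "\<forall>y\<in>convex hull (pts ` T). a0 \<bullet> y > \<beta>"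
      using separating_hyperplane_closed_point[OF convex_convex_hull _ nx] by blast
    have gpos: "0 < c \<bullet> pts a + b - \<mu>$a" if "a \<in> - T" for a
    proof -
      have "\<mu>$a \<noteq> c \<bullet> pts a + b" using that by (simp add: T_def tset_def)
      moreover have "\<mu>$a \<le> c \<bullet> pts a + b" using vcb by (simp add: valid_def)
      ultimately show ?thesis by linarith
    qed
    obtain \<delta> where \<delta>: "\<delta> > 0" "\<forall>a\<in>-T. \<delta> * \<bar>a0 \<bullet> pts a - \<beta>\<bar> < c \<bullet> pts a + b - \<mu>$a"
      using small_delta[of "-T" "\<lambda>a. c \<bullet> pts a + b - \<mu>$a" "\<lambda>a. a0 \<bullet> pts a - \<beta>"] gpos by auto
    define c' where "c' = c + \<delta> *\<^sub>R a0"
    define b' where "b' = b - \<delta> * \<beta>"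
    have val: "c' \<bullet> y + b' = c \<bullet> y + b + \<delta> * (a0 \<bullet> y - \<beta>)" for y
      unfolding c'_def b'_def by (simp add: inner_add_left algebra_simps)
    have "valid pts \<mu> c' b'" unfolding valid_def
    proof
      fix a show "\<mu>$a \<le> c' \<bullet> pts a + b'"
      proof (cases "a \<in> T")
        case True
        then have "pts a \<in> convex hull (pts ` T)" by (simp add: hull_inc)
        then have "a0 \<bullet> pts a > \<beta>" using sep by auto
        moreover have "\<mu>$a = c \<bullet> pts a + b" using True unfolding T_def tset_def by auto
        moreover have "0 < \<delta> * (a0 \<bullet> pts a - \<beta>)" using \<delta>(1) \<open>a0 \<bullet> pts a > \<beta>\<close> by simp
        ultimately show ?thesis using val[of "pts a"] by linarith
      next
        case False
        then have "\<delta> * \<bar>a0 \<bullet> pts a - \<beta>\<bar> < c \<bullet> pts a + b - \<mu>$a" using \<delta> by auto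
        moreover have "\<delta> * (- \<bar>a0 \<bullet> pts a - \<beta>\<bar>) \<le> \<delta> * (a0 \<bullet> pts a - \<beta>)"
          by (rule mult_left_mono) (use \<delta>(1) in auto)
        ultimately show ?thesis using val[of "pts a"] by linarith
      qed
    qed
    moreover have less: "c' \<bullet> x + b' < c \<bullet> x + b"
    proof -
      have "\<delta> * (a0 \<bullet> x - \<beta>) < 0" using \<delta>(1) sep(1) by (simp add: mult_pos_neg)
      then show ?thesis using val[of x] by linarith
    qed
    moreover have "c \<bullet> x + b \<le> M0" using pK p unfolding K_def by auto
    ultimately have "(c', b') \<in> K" unfolding K_def by auto
    then have "fst p \<bullet> x + snd p \<le> c' \<bullet> x + b'" using pmin by auto
    then show False using less p by simp
  qed
  then show ?thesis using vcb T_def by blast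
qed

lemma interior_finite_Union_empty:
  fixes \<F> :: "'b::euclidean_space set set"
  assumes "finite \<F>" "\<And>A. A \<in> \<F> \<Longrightarrow> closed A \<and> interior A = {}"
  shows "interior (\<Union>\<F>) = {}"
  using assms
proof (induction \<F> rule: finite_induct)
  case empty then show ?case by simp
next
  case (insert A \<F>)
  then have "interior (\<Union>\<F>) = {}" by auto
  then have "interior (A \<union> \<Union>\<F>) = interior A"
    using insert.prems by (intro interior_closed_Un_empty_interior) auto
  then show ?case using insert.prems by auto
qed

lemma dense_diff:
  fixes Op U :: "'b::euclidean_space set"
  assumes "open Op" "interior U = {}"
  shows "Op \<subseteq> closure (Op - U)"
proof
  fix y assume y: "y \<in> Op"
  show "y \<in> closure (Op - U)"
  proof (rule ccontr)
    assume ny: "y \<notin> closure (Op - U)"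
    define V where "V = Op \<inter> - closure (Op - U)"
    have "open V" unfolding V_def using assms(1) by auto
    moreover have "V \<subseteq> U"
    proof
      fix v assume v: "v \<in> V"
      show "v \<in> U"
      proof (rule ccontr)
        assume "v \<notin> U"
        then have "v \<in> Op - U" using v unfolding V_def by auto
        then have "v \<in> closure (Op - U)" using closure_subset by blast
        then show False using v unfolding V_def by auto
      qed
    qed
    ultimately have "V \<subseteq> interior U" by (rule interior_maximal[rotated])
    moreover have "y \<in> V" using y ny unfolding V_def by auto
    ultimately show False using assms(2) by auto
  qed
qed

lemma covering:
  fixes pts :: "'a::finite \<Rightarrow> real^'d::finite"
  assumes sp: "affine hull (range pts) = UNIV"
    and x: "x \<in> convex hull (range pts)"
  shows "\<exists>F. fullcell pts \<mu> F \<and> x \<in> convex hull (pts ` F)"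
proof -
  define H where "H = convex hull (range pts)"
  have "rel_interior H \<noteq> {}" unfolding H_def
    by (subst rel_interior_eq_empty) auto
  moreover have "rel_interior H = interior H"
    by (rule rel_interior_interior) (simp add: H_def sp)
  ultimately have intH: "interior H \<noteq> {}" by simp
  define \<T> where "\<T> = {T. affine hull (pts ` T) \<noteq> UNIV}"
  define U where "U = \<Union>((\<lambda>T. affine hull (pts ` T)) ` \<T>)"
  have "interior U = {}" unfolding U_def
  proof (rule interior_finite_Union_empty)
    show "finite ((\<lambda>T. affine hull (pts ` T)) ` \<T>)" by simp
  next
    fix A assume "A \<in> (\<lambda>T. affine hull (pts ` T)) ` \<T>"
    then obtain T where T: "T \<in> \<T>" "A = affine hull (pts ` T)" by auto
    have "interior A = {}"
    proof (rule ccontr)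
      assume "interior A \<noteq> {}"
      then have "affine hull A = UNIV" by (rule affine_hull_nonempty_interior)
      then show False using T unfolding \<T>_def by (simp add: hull_hull)
    qed
    then show "closed A \<and> interior A = {}" using T by simp
  qed
  define W where "W = \<Union>((\<lambda>F. convex hull (pts ` F)) ` {F. fullcell pts \<mu> F})"
  have "closed W" unfolding W_def
  proof (rule closed_Union)
    have "closed (convex hull (pts ` F))" for F
      by (rule compact_imp_closed, rule compact_convex_hull, rule finite_imp_compact) simp
    then show "\<forall>T\<in>(\<lambda>F. convex hull (pts ` F)) ` {F. fullcell pts \<mu> F}. closed T" by auto
  qed simp
  have sub: "interior H - U \<subseteq> W"
  proof
    fix z assume z: "z \<in> interior H - U"
    then obtain c b where cb: "valid pts \<mu> c b" "z \<in> convex hull (pts ` tset pts \<mu> c b)"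
      using LP_interior[of z pts \<mu>] unfolding H_def by auto
    have "z \<in> affine hull (pts ` tset pts \<mu> c b)" using cb(2) convex_hull_subset_affine_hull by blast
    then have "affine hull (pts ` tset pts \<mu> c b) = UNIV"
    proof (rule contrapos_pp)
      assume "affine hull (pts ` tset pts \<mu> c b) \<noteq> UNIV"
      then have "tset pts \<mu> c b \<in> \<T>" by (simp add: \<T>_def)
      then show "z \<notin> affine hull (pts ` tset pts \<mu> c b)" using z unfolding U_def by blast
    qed
    then have "fullcell pts \<mu> (tset pts \<mu> c b)" using cb(1) unfolding fullcell_def spans_def by blast
    then have "convex hull (pts ` tset pts \<mu> c b) \<in> (\<lambda>F. convex hull (pts ` F)) ` {F. fullcell pts \<mu> F}"
      by simp
    then show "z \<in> W" using cb(2) unfolding W_def by (rule UnionI)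
  qed
  have "x \<in> closure H" using x closure_subset unfolding H_def by blast
  also have "closure H = closure (interior H)"
    using convex_closure_interior[of H] intH by (simp add: H_def)
  also have "\<dots> \<subseteq> closure (closure (interior H - U))"
    by (rule closure_mono, rule dense_diff) (auto simp: \<open>interior U = {}\<close>)
  also have "\<dots> \<subseteq> closure W" using sub by (simp add: closure_mono)
  also have "\<dots> = W" using \<open>closed W\<close> by simp
  finally have "x \<in> W" .
  then show ?thesis unfolding W_def by auto
qed


definition Qset :: "('a::finite \<Rightarrow> real^'d::finite) \<Rightarrow> 'a set set \<Rightarrow> (real^'a) set" where
  "Qset pts S = {lam. \<forall>F. is_facet pts S F \<longrightarrow> (\<exists>c b. valid pts lam c b \<and> F \<subseteq> tset pts lam c b)}"

lemma bary_in:
  fixes pts :: "'a::finite \<Rightarrow> real^'d::finite"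
  assumes "G \<noteq> {}"
  shows "(1 / real (card G)) *\<^sub>R (\<Sum>g\<in>G. pts g) \<in> convex hull (range pts)"
proof -
  have "(1 / real (card G)) *\<^sub>R (\<Sum>g\<in>G. pts g) = (\<Sum>g\<in>G. (1 / real (card G)) *\<^sub>R pts g)"
    by (simp add: scaleR_sum_right)
  also have "\<dots> \<in> convex hull (range pts)"
    by (rule convex_sum) (use assms in \<open>auto intro: hull_inc\<close>)
  finally show ?thesis .
qed

lemma tset_add:
  fixes pts :: "'a::finite \<Rightarrow> real^'d::finite"
  assumes e: "0 < \<epsilon>" and v2: "valid pts lam c2 b2" and v: "valid pts \<mu> c b"
  shows "valid pts (lam + \<epsilon> *\<^sub>R \<mu>) (c2 + \<epsilon> *\<^sub>R c) (b2 + \<epsilon> * b)"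
    and "tset pts (lam + \<epsilon> *\<^sub>R \<mu>) (c2 + \<epsilon> *\<^sub>R c) (b2 + \<epsilon> * b) = tset pts lam c2 b2 \<inter> tset pts \<mu> c b"
proof -
  have val: "(c2 + \<epsilon> *\<^sub>R c) \<bullet> y + (b2 + \<epsilon> * b) = (c2 \<bullet> y + b2) + \<epsilon> * (c \<bullet> y + b)" for y
    by (simp add: inner_add_left algebra_simps)
  have l: "lam$a \<le> c2 \<bullet> pts a + b2" and m: "\<mu>$a \<le> c \<bullet> pts a + b" for a
    using v2 v by (auto simp: valid_def)
  have m': "\<epsilon> * \<mu>$a \<le> \<epsilon> * (c \<bullet> pts a + b)" for a using m[of a] e by simp
  show "valid pts (lam + \<epsilon> *\<^sub>R \<mu>) (c2 + \<epsilon> *\<^sub>R c) (b2 + \<epsilon> * b)"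
    unfolding valid_def
  proof
    fix a show "(lam + \<epsilon> *\<^sub>R \<mu>)$a \<le> (c2 + \<epsilon> *\<^sub>R c) \<bullet> pts a + (b2 + \<epsilon> * b)"
      using val[of "pts a"] l[of a] m'[of a] by simp
  qed
  show "tset pts (lam + \<epsilon> *\<^sub>R \<mu>) (c2 + \<epsilon> *\<^sub>R c) (b2 + \<epsilon> * b) = tset pts lam c2 b2 \<inter> tset pts \<mu> c b"
  proof (intro set_eqI)
    fix a
    have "lam$a + \<epsilon> * \<mu>$a = (c2 \<bullet> pts a + b2) + \<epsilon> * (c \<bullet> pts a + b) \<longleftrightarrow>
          lam$a = c2 \<bullet> pts a + b2 \<and> \<epsilon> * \<mu>$a = \<epsilon> * (c \<bullet> pts a + b)"
      using l[of a] m'[of a] by linarith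
    also have "\<dots> \<longleftrightarrow> lam$a = c2 \<bullet> pts a + b2 \<and> \<mu>$a = c \<bullet> pts a + b" using e by simp
    finally have *: "lam$a + \<epsilon> * \<mu>$a = (c2 \<bullet> pts a + b2) + \<epsilon> * (c \<bullet> pts a + b) \<longleftrightarrow>
          lam$a = c2 \<bullet> pts a + b2 \<and> \<mu>$a = c \<bullet> pts a + b" .
    have "a \<in> tset pts (lam + \<epsilon> *\<^sub>R \<mu>) (c2 + \<epsilon> *\<^sub>R c) (b2 + \<epsilon> * b) \<longleftrightarrow>
          lam$a + \<epsilon> * \<mu>$a = (c2 \<bullet> pts a + b2) + \<epsilon> * (c \<bullet> pts a + b)"
      unfolding tset_def val by simp
    then show "a \<in> tset pts (lam + \<epsilon> *\<^sub>R \<mu>) (c2 + \<epsilon> *\<^sub>R c) (b2 + \<epsilon> * b) \<longleftrightarrow> a \<in> tset pts lam c2 b2 \<inter> tset pts \<mu> c b"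
      using * by (simp add: tset_def)
  qed
qed

lemma in_regI:
  fixes pts :: "'a::finite \<Rightarrow> real^'d::finite"
  shows "valid pts \<mu> c b \<Longrightarrow> G = tset pts \<mu> c b \<Longrightarrow> G \<noteq> {} \<Longrightarrow> G \<in> reg_subdiv pts \<mu>"
  unfolding E_char by blast

lemma in_regE:
  fixes pts :: "'a::finite \<Rightarrow> real^'d::finite"
  assumes "G \<in> reg_subdiv pts \<mu>"
  obtains c b where "valid pts \<mu> c b" "G = tset pts \<mu> c b" "G \<noteq> {}"
proof -
  have "G \<in> {tset pts \<mu> c b | c b. valid pts \<mu> c b \<and> tset pts \<mu> c b \<noteq> {}}"
    using assms E_char[of pts \<mu>] by blast
  then show ?thesis using that by blast
qed

lemma fullcellE:
  fixes pts :: "'a::finite \<Rightarrow> real^'d::finite"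
  assumes "fullcell pts \<mu> F"
  obtains c b where "valid pts \<mu> c b" "F = tset pts \<mu> c b" "spans pts F"
  using assms unfolding fullcell_def by blast

lemma QsetD:
  fixes pts :: "'a::finite \<Rightarrow> real^'d::finite"
  assumes "lam \<in> Qset pts S" "is_facet pts S F"
  obtains c b where "valid pts lam c b" "F \<subseteq> tset pts lam c b"
  using assms unfolding Qset_def by blast

theorem thmP:
  fixes pts :: "'a::finite \<Rightarrow> real^'d::finite"
  assumes inj: "inj pts" and sp: "affine hull (range pts) = UNIV"
    and lQ: "lam \<in> Qset pts (reg_subdiv pts \<mu>)" and e: "0 < \<epsilon>"
  shows "reg_subdiv pts (lam + \<epsilon> *\<^sub>R \<mu>) = reg_subdiv pts \<mu>"
proof (intro set_eqI iffI)
  define \<nu> where "\<nu> = lam + \<epsilon> *\<^sub>R \<mu>"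
  fix G assume "G \<in> reg_subdiv pts \<mu>"
  then obtain c b where v: "valid pts \<mu> c b" and G: "G = tset pts \<mu> c b" "G \<noteq> {}" by (rule in_regE)
  define x where "x = (1 / real (card G)) *\<^sub>R (\<Sum>g\<in>G. pts g)"
  obtain F where F: "fullcell pts \<mu> F" "x \<in> convex hull (pts ` F)"
    using covering[OF sp bary_in[OF G(2)], of \<mu>] unfolding x_def by blast
  obtain c1 b1 where v1: "valid pts \<mu> c1 b1" "F = tset pts \<mu> c1 b1" "spans pts F"
    using F(1) by (rule fullcellE)
  have GF: "G \<subseteq> F"
    using BA[OF v1(1) v _ G(2) x_def F(2)] G(1) v1(2) by auto
  have facF: "is_facet pts (reg_subdiv pts \<mu>) F" using F(1) facet_iff[OF inj] by blast
  obtain c2 b2 where v2: "valid pts lam c2 b2" "F \<subseteq> tset pts lam c2 b2"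
    by (rule QsetD[OF lQ facF])
  have "tset pts (lam + \<epsilon> *\<^sub>R \<mu>) (c2 + \<epsilon> *\<^sub>R c) (b2 + \<epsilon> * b) = G"
    using tset_add(2)[OF e v2(1) v] G(1) GF v2(2) by auto
  then show "G \<in> reg_subdiv pts (lam + \<epsilon> *\<^sub>R \<mu>)"
    using tset_add(1)[OF e v2(1) v] G(2) by (intro in_regI) auto
next
  fix G assume "G \<in> reg_subdiv pts (lam + \<epsilon> *\<^sub>R \<mu>)"
  then obtain c' b' where v': "valid pts (lam + \<epsilon> *\<^sub>R \<mu>) c' b'" and G: "G = tset pts (lam + \<epsilon> *\<^sub>R \<mu>) c' b'" "G \<noteq> {}"
    by (rule in_regE)
  define x where "x = (1 / real (card G)) *\<^sub>R (\<Sum>g\<in>G. pts g)"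
  obtain F where F: "fullcell pts \<mu> F" "x \<in> convex hull (pts ` F)"
    using covering[OF sp bary_in[OF G(2)], of \<mu>] unfolding x_def by blast
  obtain c1 b1 where v1: "valid pts \<mu> c1 b1" "F = tset pts \<mu> c1 b1" "spans pts F"
    using F(1) by (rule fullcellE)
  have facF: "is_facet pts (reg_subdiv pts \<mu>) F" using F(1) facet_iff[OF inj] by blast
  obtain c2 b2 where v2: "valid pts lam c2 b2" "F \<subseteq> tset pts lam c2 b2"
    by (rule QsetD[OF lQ facF])
  define C where "C = c2 + \<epsilon> *\<^sub>R c1"
  define B where "B = b2 + \<epsilon> * b1"
  have vC: "valid pts (lam + \<epsilon> *\<^sub>R \<mu>) C B" unfolding C_def B_def by (rule tset_add(1)[OF e v2(1) v1(1)])
  have tC: "tset pts (lam + \<epsilon> *\<^sub>R \<mu>) C B = F"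
    unfolding C_def B_def using tset_add(2)[OF e v2(1) v1(1)] v1(2) v2(2) by auto
  have GF: "G \<subseteq> F"
    using BA[OF vC v' _ G(2) x_def] F(2) tC G(1) by auto
  define h where "h a = (c' \<bullet> pts a + b') - (C \<bullet> pts a + B)" for a
  have gpos: "0 < c1 \<bullet> pts a + b1 - \<mu>$a" if "a \<in> -F" for a
  proof -
    have "\<mu>$a \<noteq> c1 \<bullet> pts a + b1" using that v1(2) by (simp add: tset_def)
    moreover have "\<mu>$a \<le> c1 \<bullet> pts a + b1" using v1(1) by (simp add: valid_def)
    ultimately show ?thesis by linarith
  qed
  obtain \<delta> where \<delta>: "\<delta> > 0" "\<forall>a\<in>-F. \<delta> * \<bar>h a\<bar> < c1 \<bullet> pts a + b1 - \<mu>$a"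
    using small_delta[of "-F" "\<lambda>a. c1 \<bullet> pts a + b1 - \<mu>$a" h] gpos by auto
  define c'' where "c'' = c1 + \<delta> *\<^sub>R (c' - C)"
  define b'' where "b'' = b1 + \<delta> * (b' - B)"
  have val: "c'' \<bullet> pts a + b'' = c1 \<bullet> pts a + b1 + \<delta> * h a" for a
    unfolding c''_def b''_def h_def by (simp add: inner_add_left inner_diff_left algebra_simps)
  have hF: "0 \<le> h a \<and> (h a = 0 \<longleftrightarrow> a \<in> G)" if "a \<in> F" for a
  proof -
    have "(lam + \<epsilon> *\<^sub>R \<mu>)$a = C \<bullet> pts a + B" using that tC by (auto simp: tset_def)
    moreover have "(lam + \<epsilon> *\<^sub>R \<mu>)$a \<le> c' \<bullet> pts a + b'" using v' by (simp add: valid_def)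
    moreover have "a \<in> G \<longleftrightarrow> (lam + \<epsilon> *\<^sub>R \<mu>)$a = c' \<bullet> pts a + b'" using G(1) by (simp add: tset_def)
    ultimately show ?thesis unfolding h_def by linarith
  qed
  have muF: "\<mu>$a = c1 \<bullet> pts a + b1" if "a \<in> F" for a using that v1(2) by (simp add: tset_def)
  have "valid pts \<mu> c'' b''" unfolding valid_def
  proof
    fix a show "\<mu>$a \<le> c'' \<bullet> pts a + b''"
    proof (cases "a \<in> F")
      case True
      then have "0 \<le> \<delta> * h a" using hF \<delta>(1) by simp
      then show ?thesis using val[of a] muF[OF True] by linarith
    next
      case False
      then have "\<delta> * \<bar>h a\<bar> < c1 \<bullet> pts a + b1 - \<mu>$a" using \<delta> by auto
      moreover have "\<delta> * (- \<bar>h a\<bar>) \<le> \<delta> * h a" by (rule mult_left_mono) (use \<delta>(1) in auto)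
      ultimately show ?thesis using val[of a] by linarith
    qed
  qed
  moreover have "tset pts \<mu> c'' b'' = G"
  proof (intro set_eqI)
    fix a show "a \<in> tset pts \<mu> c'' b'' \<longleftrightarrow> a \<in> G"
    proof (cases "a \<in> F")
      case True
      have "a \<in> tset pts \<mu> c'' b'' \<longleftrightarrow> \<delta> * h a = 0"
        using val[of a] muF[OF True] by (auto simp: tset_def)
      also have "\<dots> \<longleftrightarrow> a \<in> G" using hF[OF True] \<delta>(1) by simp
      finally show ?thesis .
    next
      case False
      then have "\<delta> * \<bar>h a\<bar> < c1 \<bullet> pts a + b1 - \<mu>$a" using \<delta> by auto
      moreover have "\<delta> * (- \<bar>h a\<bar>) \<le> \<delta> * h a" by (rule mult_left_mono) (use \<delta>(1) in auto)
      ultimately have "a \<notin> tset pts \<mu> c'' b''" using val[of a] by (auto simp: tset_def)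
      moreover have "a \<notin> G" using False GF by auto
      ultimately show ?thesis by simp
    qed
  qed
  ultimately show "G \<in> reg_subdiv pts \<mu>" using G(2) by (intro in_regI) auto
qed


definition Qf :: "('a::finite \<Rightarrow> real^'d::finite) \<Rightarrow> 'a set \<Rightarrow> (real^'a) set" where
  "Qf pts F = {lam. \<exists>c b. valid pts lam c b \<and> F \<subseteq> tset pts lam c b}"

definition Lsp :: "('a::finite \<Rightarrow> real^'d::finite) \<Rightarrow> 'a set \<Rightarrow> (real^'a) set" where
  "Lsp pts F = {lam. \<exists>c b. \<forall>f\<in>F. lam$f = c \<bullet> pts f + b}"

lemma subspace_Lsp: "subspace (Lsp pts F)"
proof -
  have z: "0 \<in> Lsp pts F" unfolding Lsp_def by (auto intro!: exI[of _ 0])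
  have a: "x + y \<in> Lsp pts F" if hx: "x \<in> Lsp pts F" and hy: "y \<in> Lsp pts F" for x y
  proof -
    obtain c1 b1 where 1: "\<forall>f\<in>F. x$f = c1 \<bullet> pts f + b1" using hx by (auto simp: Lsp_def)
    obtain c2 b2 where 2: "\<forall>f\<in>F. y$f = c2 \<bullet> pts f + b2" using hy by (auto simp: Lsp_def)
    have "\<forall>f\<in>F. (x + y)$f = (c1 + c2) \<bullet> pts f + (b1 + b2)" using 1 2 by (simp add: inner_add_left)
    then show ?thesis unfolding Lsp_def by blast
  qed
  have s: "r *\<^sub>R x \<in> Lsp pts F" if hx: "x \<in> Lsp pts F" for x r
  proof -
    obtain c1 b1 where 1: "\<forall>f\<in>F. x$f = c1 \<bullet> pts f + b1" using hx by (auto simp: Lsp_def)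
    have "\<forall>f\<in>F. (r *\<^sub>R x)$f = (r *\<^sub>R c1) \<bullet> pts f + (r * b1)" using 1 by (simp add: algebra_simps)
    then show ?thesis unfolding Lsp_def by blast
  qed
  show ?thesis unfolding subspace_def using z a s by blast
qed

lemma Qf_eq:
  fixes pts :: "'a::finite \<Rightarrow> real^'d::finite"
  assumes U: "\<And>a. sum (U a) F = 1 \<and> (\<Sum>f\<in>F. U a f *\<^sub>R pts f) = pts a"
  shows "Qf pts F = Lsp pts F \<inter> (\<Inter>a. {lam. lam$a \<le> (\<Sum>f\<in>F. U a f * lam$f)})"
proof (intro set_eqI iffI)
  fix lam assume "lam \<in> Qf pts F"
  then obtain c b where v: "valid pts lam c b" and F: "F \<subseteq> tset pts lam c b" unfolding Qf_def by blast
  have eqF: "\<forall>f\<in>F. lam$f = c \<bullet> pts f + b" using F by (auto simp: tset_def)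
  have "lam$a \<le> (\<Sum>f\<in>F. U a f * lam$f)" for a
  proof -
    have "(\<Sum>f\<in>F. U a f * lam$f) = (\<Sum>f\<in>F. U a f * (c \<bullet> pts f + b))" using eqF by simp
    also have "\<dots> = c \<bullet> pts a + b" using aff_comb[of "U a" F c pts b] U[of a] by simp
    finally show ?thesis using v by (simp add: valid_def)
  qed
  then show "lam \<in> Lsp pts F \<inter> (\<Inter>a. {lam. lam$a \<le> (\<Sum>f\<in>F. U a f * lam$f)})"
    using eqF unfolding Lsp_def by blast
next
  fix lam assume lam: "lam \<in> Lsp pts F \<inter> (\<Inter>a. {lam. lam$a \<le> (\<Sum>f\<in>F. U a f * lam$f)})"
  then obtain c b where eqF: "\<forall>f\<in>F. lam$f = c \<bullet> pts f + b" unfolding Lsp_def by blast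
  have "lam$a \<le> c \<bullet> pts a + b" for a
  proof -
    have "(\<Sum>f\<in>F. U a f * lam$f) = (\<Sum>f\<in>F. U a f * (c \<bullet> pts f + b))" using eqF by simp
    also have "\<dots> = c \<bullet> pts a + b" using aff_comb[of "U a" F c pts b] U[of a] by simp
    moreover have "lam$a \<le> (\<Sum>f\<in>F. U a f * lam$f)" using lam by blast
    ultimately show ?thesis by linarith
  qed
  then show "lam \<in> Qf pts F" using eqF unfolding Qf_def valid_def tset_def by blast
qed

lemma halfspace_poly:
  fixes U :: "'a::finite \<Rightarrow> real"
  shows "polyhedron {lam :: real^'a. lam$a \<le> (\<Sum>f\<in>F. U f * lam$f)}"
proof -
  define v :: "real^'a" where "v = axis a 1 - (\<Sum>f\<in>F. U f *\<^sub>R axis f 1)"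
  have "{lam :: real^'a. lam$a \<le> (\<Sum>f\<in>F. U f * lam$f)} = {lam. v \<bullet> lam \<le> 0}"
    by (auto simp: v_def inner_diff_left inner_sum_left inner_axis')
  then show ?thesis using polyhedron_halfspace_le by metis
qed

lemma spans_mono: "spans pts F \<Longrightarrow> F \<subseteq> G \<Longrightarrow> spans pts G"
  unfolding spans_def by (metis UNIV_I hull_mono image_mono subsetI subset_antisym)

lemma facet_spans: "is_facet pts S F \<Longrightarrow> spans pts F"
  unfolding is_facet_def spans_aff_dim by blast

lemma polyhedron_Qf:
  fixes pts :: "'a::finite \<Rightarrow> real^'d::finite"
  assumes inj: "inj pts" and sp: "spans pts F"
  shows "polyhedron (Qf pts F)"
proof -
  have "\<forall>a. \<exists>u. sum u F = 1 \<and> (\<Sum>f\<in>F. u f *\<^sub>R pts f) = pts a"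
    using spans_rep[OF inj sp] by blast
  then obtain U where U: "\<And>a. sum (U a) F = 1 \<and> (\<Sum>f\<in>F. U a f *\<^sub>R pts f) = pts a" by metis
  have "polyhedron (Lsp pts F)"
    by (rule affine_imp_polyhedron, rule subspace_imp_affine, rule subspace_Lsp)
  moreover have "polyhedron (\<Inter>a. {lam :: real^'a. lam$a \<le> (\<Sum>f\<in>F. U a f * lam$f)})"
    by (rule polyhedron_Inter) (auto intro: halfspace_poly)
  ultimately show ?thesis unfolding Qf_eq[OF U] by (rule polyhedron_Int)
qed

lemma Qset_Inter: "Qset pts S = \<Inter>(Qf pts ` {F. is_facet pts S F})"
  unfolding Qset_def Qf_def by auto

lemma polyhedron_Qset:
  fixes pts :: "'a::finite \<Rightarrow> real^'d::finite"
  assumes inj: "inj pts"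
  shows "polyhedron (Qset pts S)"
  unfolding Qset_Inter
  by (rule polyhedron_Inter) (auto intro!: polyhedron_Qf[OF inj] facet_spans)

lemma closed_Qset:
  fixes pts :: "'a::finite \<Rightarrow> real^'d::finite"
  shows "inj pts \<Longrightarrow> closed (Qset pts S)"
  by (rule polyhedron_imp_closed, rule polyhedron_Qset)

lemma convex_Qset:
  fixes pts :: "'a::finite \<Rightarrow> real^'d::finite"
  shows "inj pts \<Longrightarrow> convex (Qset pts S)"
  by (rule polyhedron_imp_convex, rule polyhedron_Qset)

lemma class_sub_Qset:
  fixes pts :: "'a::finite \<Rightarrow> real^'d::finite"
  assumes inj: "inj pts" and "reg_subdiv pts mu = S"
  shows "mu \<in> Qset pts S"
  unfolding Qset_def
proof (intro CollectI allI impI)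
  fix F assume "is_facet pts S F"
  then have "fullcell pts mu F" using facet_iff[OF inj] assms(2) by blast
  then show "\<exists>c b. valid pts mu c b \<and> F \<subseteq> tset pts mu c b" unfolding fullcell_def by blast
qed

lemma closure_class:
  fixes pts :: "'a::finite \<Rightarrow> real^'d::finite"
  assumes inj: "inj pts" and sp: "affine hull (range pts) = UNIV"
  shows "closure {mu. reg_subdiv pts mu = reg_subdiv pts \<mu>} = Qset pts (reg_subdiv pts \<mu>)"
proof
  show "closure {mu. reg_subdiv pts mu = reg_subdiv pts \<mu>} \<subseteq> Qset pts (reg_subdiv pts \<mu>)"
  proof (rule closure_minimal)
    show "{mu. reg_subdiv pts mu = reg_subdiv pts \<mu>} \<subseteq> Qset pts (reg_subdiv pts \<mu>)"
      using class_sub_Qset[OF inj] by blast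
    show "closed (Qset pts (reg_subdiv pts \<mu>))" by (rule closed_Qset[OF inj])
  qed
next
  show "Qset pts (reg_subdiv pts \<mu>) \<subseteq> closure {mu. reg_subdiv pts mu = reg_subdiv pts \<mu>}"
  proof
    fix lam assume lam: "lam \<in> Qset pts (reg_subdiv pts \<mu>)"
    show "lam \<in> closure {mu. reg_subdiv pts mu = reg_subdiv pts \<mu>}"
      unfolding closure_approachable
    proof (intro allI impI)
      fix e :: real assume e: "0 < e"
      define t where "t = e / (norm \<mu> + 1)"
      have t: "0 < t" unfolding t_def using e by (intro divide_pos_pos) (auto intro: add_nonneg_pos)
      have "reg_subdiv pts (lam + t *\<^sub>R \<mu>) = reg_subdiv pts \<mu>" by (rule thmP[OF inj sp lam t])
      moreover have "dist (lam + t *\<^sub>R \<mu>) lam < e"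
      proof -
        have "dist (lam + t *\<^sub>R \<mu>) lam = t * norm \<mu>" using t by (simp add: dist_norm)
        also have "\<dots> < e"
        proof -
          have d: "0 < norm \<mu> + 1" by (simp add: add_nonneg_pos)
          have "e * norm \<mu> < e * (norm \<mu> + 1)" using e by simp
          then have "e * norm \<mu> / (norm \<mu> + 1) < e" using d by (simp add: pos_divide_less_eq)
          then show ?thesis unfolding t_def by simp
        qed
        finally show ?thesis .
      qed
      ultimately show "\<exists>y\<in>{mu. reg_subdiv pts mu = reg_subdiv pts \<mu>}. dist y lam < e" by blast
    qed
  qed
qed

lemma scale_valid:
  fixes pts :: "'a::finite \<Rightarrow> real^'d::finite"
  assumes t: "0 < t"
  shows "valid pts (t *\<^sub>R lam) (t *\<^sub>R c) (t * b) \<longleftrightarrow> valid pts lam c b"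
    and "tset pts (t *\<^sub>R lam) (t *\<^sub>R c) (t * b) = tset pts lam c b"
proof -
  have *: "(t *\<^sub>R c) \<bullet> y + t * b = t * (c \<bullet> y + b)" for y by (simp add: algebra_simps)
  show "valid pts (t *\<^sub>R lam) (t *\<^sub>R c) (t * b) \<longleftrightarrow> valid pts lam c b"
    unfolding valid_def * using t by simp
  show "tset pts (t *\<^sub>R lam) (t *\<^sub>R c) (t * b) = tset pts lam c b"
    unfolding tset_def * using t by simp
qed

lemma scale_reg_sub:
  fixes pts :: "'a::finite \<Rightarrow> real^'d::finite"
  assumes t: "0 < t"
  shows "reg_subdiv pts lam \<subseteq> reg_subdiv pts (t *\<^sub>R lam)"
proof
  fix G assume "G \<in> reg_subdiv pts lam"
  then obtain c b where "valid pts lam c b" "G = tset pts lam c b" "G \<noteq> {}" by (rule in_regE)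
  then show "G \<in> reg_subdiv pts (t *\<^sub>R lam)"
    using scale_valid[OF t, of pts lam c b] by (intro in_regI) auto
qed

lemma scale_reg:
  fixes pts :: "'a::finite \<Rightarrow> real^'d::finite"
  assumes t: "0 < t"
  shows "reg_subdiv pts (t *\<^sub>R lam) = reg_subdiv pts lam"
proof
  show "reg_subdiv pts lam \<subseteq> reg_subdiv pts (t *\<^sub>R lam)" by (rule scale_reg_sub[OF t])
  have "reg_subdiv pts (t *\<^sub>R lam) \<subseteq> reg_subdiv pts ((1/t) *\<^sub>R (t *\<^sub>R lam))"
    by (rule scale_reg_sub) (use t in simp)
  then show "reg_subdiv pts (t *\<^sub>R lam) \<subseteq> reg_subdiv pts lam" using t by simp
qed


lemma finite_eps:
  assumes "finite I" "\<And>i. i \<in> I \<Longrightarrow> \<exists>e>0. \<forall>e'. 0 < e' \<and> e' \<le> e \<longrightarrow> P i e'"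
  shows "\<exists>e>(0::real). \<forall>i\<in>I. P i e"
proof -
  obtain E where E: "\<And>i. i \<in> I \<Longrightarrow> E i > 0 \<and> (\<forall>e'. 0 < e' \<and> e' \<le> E i \<longrightarrow> P i e')"
    using assms(2) by metis
  define e where "e = Min (insert 1 (E ` I))"
  have pos: "0 < e" unfolding e_def using assms(1) E by (subst Min_gr_iff) auto
  have "e \<le> E i" if "i \<in> I" for i unfolding e_def using assms(1) that by (intro Min_le) auto
  then show ?thesis using pos E by blast
qed

lemma relint_prolong:
  fixes S :: "'b::euclidean_space set"
  assumes x: "x \<in> rel_interior S" and y: "y \<in> S"
  shows "\<exists>\<epsilon>>0. x + \<epsilon> *\<^sub>R (x - y) \<in> S"
proof -
  obtain e where e: "e > 0" "ball x e \<inter> affine hull S \<subseteq> S"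
    using x mem_rel_interior_ball by blast
  have xS: "x \<in> S" using x rel_interior_subset by blast
  define \<epsilon> where "\<epsilon> = e / (2 * (norm (x - y) + 1))"
  have d: "0 < norm (x - y) + 1" by (simp add: add_nonneg_pos)
  have epos: "0 < \<epsilon>" unfolding \<epsilon>_def using e d by simp
  have "dist (x + \<epsilon> *\<^sub>R (x - y)) x = \<epsilon> * norm (x - y)" using epos by (simp add: dist_norm)
  also have "\<dots> < e"
  proof -
    have "\<epsilon> * norm (x - y) \<le> \<epsilon> * (norm (x - y) + 1)" using epos by simp
    also have "\<dots> = e / 2" unfolding \<epsilon>_def using d by (simp add: field_simps)
    finally show ?thesis using e by simp
  qed
  finally have inball: "x + \<epsilon> *\<^sub>R (x - y) \<in> ball x e" by (simp add: dist_commute)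
  have "x + \<epsilon> *\<^sub>R (x - y) = (1 + \<epsilon>) *\<^sub>R x + (- \<epsilon>) *\<^sub>R y" by (simp add: algebra_simps)
  moreover have "(1 + \<epsilon>) *\<^sub>R x + (- \<epsilon>) *\<^sub>R y \<in> affine hull S"
    by (rule mem_affine[OF affine_affine_hull]) (use xS y in \<open>auto intro: hull_inc\<close>)
  ultimately have "x + \<epsilon> *\<^sub>R (x - y) \<in> affine hull S" by simp
  then show ?thesis using inball e epos by blast
qed

lemma prolong:
  fixes pts :: "'a::finite \<Rightarrow> real^'d::finite"
  assumes inj: "inj pts" and lQ: "lam' \<in> Qset pts (reg_subdiv pts \<mu>)"
  shows "\<exists>\<epsilon>>0. \<mu> + \<epsilon> *\<^sub>R (\<mu> - lam') \<in> Qset pts (reg_subdiv pts \<mu>)"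
proof -
  have "\<exists>\<epsilon>>0. \<forall>F\<in>{F. is_facet pts (reg_subdiv pts \<mu>) F}. \<mu> + \<epsilon> *\<^sub>R (\<mu> - lam') \<in> Qf pts F"
  proof (rule finite_eps)
    fix F assume "F \<in> {F. is_facet pts (reg_subdiv pts \<mu>) F}"
    then have facF: "is_facet pts (reg_subdiv pts \<mu>) F" by simp
    obtain c b where v: "valid pts \<mu> c b" "F = tset pts \<mu> c b"
      using facF facet_iff[OF inj] unfolding fullcell_def by blast
    obtain c' b' where v': "valid pts lam' c' b'" "F \<subseteq> tset pts lam' c' b'"
      by (rule QsetD[OF lQ facF])
    define g where "g a = c \<bullet> pts a + b - \<mu>$a" for a
    define D where "D a = c' \<bullet> pts a + b' - lam'$a" for a
    have gpos: "0 < g a" if "a \<in> -F" for a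
    proof -
      have "\<mu>$a \<noteq> c \<bullet> pts a + b" using that v(2) by (simp add: tset_def)
      moreover have "\<mu>$a \<le> c \<bullet> pts a + b" using v(1) by (simp add: valid_def)
      ultimately show ?thesis unfolding g_def by linarith
    qed
    obtain e0 where e0: "e0 > 0" "\<forall>a\<in>-F. e0 * \<bar>D a\<bar> < g a"
      using small_delta[of "-F" g D] gpos by auto
    have "\<forall>e'. 0 < e' \<and> e' \<le> e0 \<longrightarrow> \<mu> + e' *\<^sub>R (\<mu> - lam') \<in> Qf pts F"
    proof (intro allI impI)
      fix e' assume e': "0 < e' \<and> e' \<le> e0"
      define C where "C = (1 + e') *\<^sub>R c - e' *\<^sub>R c'"
      define B where "B = (1 + e') * b - e' * b'"
      have key: "C \<bullet> pts a + B - (\<mu> + e' *\<^sub>R (\<mu> - lam'))$a = (1 + e') * g a - e' * D a" for a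
        unfolding C_def B_def g_def D_def by (simp add: inner_diff_left algebra_simps)
      have Dnn: "0 \<le> D a" for a using v'(1) by (simp add: D_def valid_def)
      have valid: "valid pts (\<mu> + e' *\<^sub>R (\<mu> - lam')) C B" unfolding valid_def
      proof
        fix a
        have "0 \<le> (1 + e') * g a - e' * D a"
        proof (cases "a \<in> F")
          case True
          then have "g a = 0" "D a = 0" using v(2) v'(2) by (auto simp: g_def D_def tset_def)
          then show ?thesis by simp
        next
          case False
          then have "e0 * \<bar>D a\<bar> < g a" using e0 by auto
          moreover have "e' * D a \<le> e0 * \<bar>D a\<bar>" using e' Dnn[of a] by (simp add: mult_right_mono)
          moreover have "g a \<le> (1 + e') * g a" using gpos[of a] False e' by simp
          ultimately show ?thesis by linarith
        qed
        then show "(\<mu> + e' *\<^sub>R (\<mu> - lam'))$a \<le> C \<bullet> pts a + B" using key[of a] by linarith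
      qed
      moreover have "F \<subseteq> tset pts (\<mu> + e' *\<^sub>R (\<mu> - lam')) C B"
      proof
        fix a assume "a \<in> F"
        then have "g a = 0" "D a = 0" using v(2) v'(2) by (auto simp: g_def D_def tset_def)
        then show "a \<in> tset pts (\<mu> + e' *\<^sub>R (\<mu> - lam')) C B"
          using key[of a] by (simp add: tset_def)
      qed
      ultimately show "\<mu> + e' *\<^sub>R (\<mu> - lam') \<in> Qf pts F" unfolding Qf_def by blast
    qed
    then show "\<exists>e>0. \<forall>e'. 0 < e' \<and> e' \<le> e \<longrightarrow> \<mu> + e' *\<^sub>R (\<mu> - lam') \<in> Qf pts F"
      using e0(1) by blast
  qed simp
  then show ?thesis unfolding Qset_Inter by blast
qed


lemma fan_face:
  fixes pts :: "'a::finite \<Rightarrow> real^'d::finite"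
  assumes inj: "inj pts" and sp: "affine hull (range pts) = UNIV"
    and tau: "\<tau> = closure {mu. reg_subdiv pts mu = reg_subdiv pts lam0}"
    and face: "\<sigma> face_of \<tau>" and ne: "\<sigma> \<noteq> {}"
  shows "\<exists>lam. lam \<in> \<sigma> \<and> \<sigma> = Qset pts (reg_subdiv pts lam) \<and> cone_subdiv pts \<sigma> = reg_subdiv pts lam"
proof -
  define S0 where "S0 = reg_subdiv pts lam0"
  have tauQ: "\<tau> = Qset pts S0" unfolding tau S0_def by (rule closure_class[OF inj sp])
  have "convex \<sigma>" by (rule face_of_imp_convex[OF face])
  then have "rel_interior \<sigma> \<noteq> {}" using ne by (simp add: rel_interior_eq_empty)
  then obtain lam where lamri: "lam \<in> rel_interior \<sigma>" by blast
  have lams: "lam \<in> \<sigma>" using lamri rel_interior_subset by blast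
  have sigtau: "\<sigma> \<subseteq> \<tau>" by (rule face_of_imp_subset[OF face])
  define S where "S = reg_subdiv pts lam"
  have facet0: "is_facet pts S0 F \<longleftrightarrow> fullcell pts lam0 F" for F
    unfolding S0_def by (rule facet_iff[OF inj])
  have facetS: "is_facet pts S F \<longleftrightarrow> fullcell pts lam F" for F
    unfolding S_def by (rule facet_iff[OF inj])
  have C1: "\<sigma> \<subseteq> Qset pts S"
  proof
    fix l' assume l': "l' \<in> \<sigma>"
    obtain \<epsilon> where e: "\<epsilon> > 0" and l'': "lam + \<epsilon> *\<^sub>R (lam - l') \<in> \<sigma>"
      using relint_prolong[OF lamri l'] by blast
    define l2 where "l2 = lam + \<epsilon> *\<^sub>R (lam - l')"
    have l2Q: "l2 \<in> Qset pts S0" using l'' sigtau tauQ l2_def by blast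
    have l'Q: "l' \<in> Qset pts S0" using l' sigtau tauQ by blast
    show "l' \<in> Qset pts S" unfolding Qset_def
    proof (intro CollectI allI impI)
      fix F assume "is_facet pts S F"
      then obtain c b where v: "valid pts lam c b" "F = tset pts lam c b" "spans pts F"
        using facetS unfolding fullcell_def by blast
      have Fne: "F \<noteq> {}" using v(3) spans_nonempty by blast
      define x where "x = (1 / real (card F)) *\<^sub>R (\<Sum>g\<in>F. pts g)"
      obtain F1 where F1: "fullcell pts lam0 F1" "x \<in> convex hull (pts ` F1)"
        using covering[OF sp bary_in[OF Fne], of lam0] unfolding x_def by blast
      have facF1: "is_facet pts S0 F1" using F1(1) facet0 by blast
      obtain c2 b2 where v2: "valid pts l2 c2 b2" "F1 \<subseteq> tset pts l2 c2 b2"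
        by (rule QsetD[OF l2Q facF1])
      obtain c1 b1 where v1: "valid pts l' c1 b1" "F1 \<subseteq> tset pts l' c1 b1"
        by (rule QsetD[OF l'Q facF1])
      have nu: "l2 + \<epsilon> *\<^sub>R l' = (1 + \<epsilon>) *\<^sub>R lam" unfolding l2_def by (simp add: algebra_simps)
      have vPsi: "valid pts ((1 + \<epsilon>) *\<^sub>R lam) (c2 + \<epsilon> *\<^sub>R c1) (b2 + \<epsilon> * b1)"
        using tset_add(1)[OF e v2(1) v1(1)] nu by simp
      have tPsi: "tset pts ((1 + \<epsilon>) *\<^sub>R lam) (c2 + \<epsilon> *\<^sub>R c1) (b2 + \<epsilon> * b1) = tset pts l2 c2 b2 \<inter> tset pts l' c1 b1"
        using tset_add(2)[OF e v2(1) v1(1)] nu by simp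
      have e1: "0 < 1 + \<epsilon>" using e by simp
      have vphi: "valid pts ((1 + \<epsilon>) *\<^sub>R lam) ((1 + \<epsilon>) *\<^sub>R c) ((1 + \<epsilon>) * b)"
        using scale_valid(1)[OF e1] v(1) by blast
      have tphi: "tset pts ((1 + \<epsilon>) *\<^sub>R lam) ((1 + \<epsilon>) *\<^sub>R c) ((1 + \<epsilon>) * b) = F"
        using scale_valid(2)[OF e1] v(2) by simp
      have "F \<subseteq> tset pts ((1 + \<epsilon>) *\<^sub>R lam) (c2 + \<epsilon> *\<^sub>R c1) (b2 + \<epsilon> * b1)"
        using BA[OF vPsi vphi _ Fne x_def F1(2)] tphi tPsi v1(2) v2(2) by auto
      then have "F \<subseteq> tset pts l' c1 b1" using tPsi by auto
      then show "\<exists>c b. valid pts l' c b \<and> F \<subseteq> tset pts l' c b" using v1(1) by blast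
    qed
  qed
  have QS0: "Qset pts S \<subseteq> Qset pts S0"
  proof
    fix l' assume l'Q: "l' \<in> Qset pts S"
    show "l' \<in> Qset pts S0" unfolding Qset_def
    proof (intro CollectI allI impI)
      fix F0 assume facF0: "is_facet pts S0 F0"
      then have sp0: "spans pts F0" by (rule facet_spans)
      have "lam \<in> Qset pts S0" using lams sigtau tauQ by blast
      then obtain c b where v: "valid pts lam c b" "F0 \<subseteq> tset pts lam c b" by (rule QsetD[OF _ facF0])
      have "spans pts (tset pts lam c b)" using spans_mono[OF sp0 v(2)] .
      then have "is_facet pts S (tset pts lam c b)" using facetS v(1) unfolding fullcell_def by blast
      then obtain c' b' where v': "valid pts l' c' b'" "tset pts lam c b \<subseteq> tset pts l' c' b'"
        by (rule QsetD[OF l'Q])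
      then show "\<exists>c b. valid pts l' c b \<and> F0 \<subseteq> tset pts l' c b" using v(2) by blast
    qed
  qed
  have C2: "Qset pts S \<subseteq> \<sigma>"
  proof
    fix l' assume l'Q: "l' \<in> Qset pts S"
    show "l' \<in> \<sigma>"
    proof (cases "l' = lam")
      case True then show ?thesis using lams by simp
    next
      case False
      obtain \<epsilon> where e: "\<epsilon> > 0" and l3: "lam + \<epsilon> *\<^sub>R (lam - l') \<in> Qset pts S"
        using prolong[OF inj, of l' lam] l'Q unfolding S_def by blast
      define l3' where "l3' = lam + \<epsilon> *\<^sub>R (lam - l')"
      have l3t: "l3' \<in> \<tau>" using l3 QS0 tauQ l3'_def by blast
      have l't: "l' \<in> \<tau>" using l'Q QS0 tauQ by blast
      have ne': "l' \<noteq> l3'"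
      proof
        assume "l' = l3'"
        then have "(1 + \<epsilon>) *\<^sub>R (l' - lam) = 0" unfolding l3'_def by (simp add: algebra_simps)
        then show False using e False by simp
      qed
      define u where "u = 1 / (1 + \<epsilon>)"
      have u: "0 < u" "u < 1" using e unfolding u_def by auto
      have "(1 - u) *\<^sub>R l' + u *\<^sub>R l3' = lam"
      proof -
        have "(1 + \<epsilon>) *\<^sub>R ((1 - u) *\<^sub>R l' + u *\<^sub>R l3') = (1 + \<epsilon>) *\<^sub>R lam"
          unfolding u_def l3'_def using e by (simp add: algebra_simps field_simps)
        then show ?thesis using e by simp
      qed
      then have "lam \<in> open_segment l' l3'" unfolding in_segment using ne' u by blast
      then show ?thesis using face_ofD[OF face _ l't l3t lams] by blast
    qed
  qed
  have sigQ: "\<sigma> = Qset pts S" using C1 C2 by (rule subset_antisym)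
  have clS: "closure {mu. reg_subdiv pts mu = S} = \<sigma>"
    unfolding sigQ S_def by (rule closure_class[OF inj sp])
  have uniq: "S1 = S" if h: "closure {mu. reg_subdiv pts mu = S1} = \<sigma>" for S1
  proof -
    have "{mu. reg_subdiv pts mu = S1} \<noteq> {}"
    proof
      assume "{mu. reg_subdiv pts mu = S1} = {}"
      then have "\<sigma> = {}" using h by simp
      then show False using ne by simp
    qed
    then obtain mu1 where mu1: "reg_subdiv pts mu1 = S1" by blast
    have sQ1: "\<sigma> = Qset pts S1" using h closure_class[OF inj sp, of mu1] mu1 by simp
    have "mu1 \<in> \<sigma>" using sQ1 class_sub_Qset[OF inj mu1] by simp
    then obtain \<epsilon> where e: "\<epsilon> > 0" and l0: "lam + \<epsilon> *\<^sub>R (lam - mu1) \<in> \<sigma>"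
      using relint_prolong[OF lamri] by blast
    have "reg_subdiv pts ((lam + \<epsilon> *\<^sub>R (lam - mu1)) + \<epsilon> *\<^sub>R mu1) = reg_subdiv pts mu1"
      by (rule thmP[OF inj sp _ e]) (use l0 sQ1 mu1 in simp)
    moreover have "(lam + \<epsilon> *\<^sub>R (lam - mu1)) + \<epsilon> *\<^sub>R mu1 = (1 + \<epsilon>) *\<^sub>R lam" by (simp add: algebra_simps)
    moreover have "reg_subdiv pts ((1 + \<epsilon>) *\<^sub>R lam) = reg_subdiv pts lam" by (rule scale_reg) (use e in simp)
    ultimately have "reg_subdiv pts lam = reg_subdiv pts mu1" by simp
    then show ?thesis using mu1 unfolding S_def by simp
  qed
  have "cone_subdiv pts \<sigma> = S"
    unfolding cone_subdiv_def by (rule the_equality[where P="\<lambda>S1. closure {mu. reg_subdiv pts mu = S1} = \<sigma>", OF clS uniq])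
  then have cs: "cone_subdiv pts \<sigma> = reg_subdiv pts lam" unfolding S_def .
  have sq: "\<sigma> = Qset pts (reg_subdiv pts lam)" using sigQ unfolding S_def .
  show ?thesis by (rule exI[of _ lam]) (intro conjI lams sq cs)
qed


lemma Qset_cone:
  fixes pts :: "'a::finite \<Rightarrow> real^'d::finite"
  assumes "lam \<in> Qset pts S" "0 < t"
  shows "t *\<^sub>R lam \<in> Qset pts S"
  unfolding Qset_def
proof (intro CollectI allI impI)
  fix F assume "is_facet pts S F"
  then obtain c b where "valid pts lam c b" "F \<subseteq> tset pts lam c b" by (rule QsetD[OF assms(1)])
  then show "\<exists>c b. valid pts (t *\<^sub>R lam) c b \<and> F \<subseteq> tset pts (t *\<^sub>R lam) c b"
    using scale_valid[OF assms(2), of pts lam c b] by blast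
qed

lemma zero_Qset:
  fixes pts :: "'a::finite \<Rightarrow> real^'d::finite"
  shows "0 \<in> Qset pts S"
  unfolding Qset_def
proof (intro CollectI allI impI)
  fix F
  have "valid pts 0 0 0" by (simp add: valid_def)
  moreover have "F \<subseteq> tset pts 0 0 0" by (simp add: tset_def)
  ultimately show "\<exists>c b. valid pts 0 c b \<and> F \<subseteq> tset pts 0 c b" by blast
qed

lemma poly_bound:
  fixes K :: "(real^'n::finite) set" and gv :: "real^'n" and \<psi> :: "real^'n \<Rightarrow> real"
  assumes polyK: "polyhedron K" and cone: "\<And>x t. x \<in> K \<Longrightarrow> 0 < t \<Longrightarrow> t *\<^sub>R x \<in> K"
    and g: "\<And>x. x \<in> K \<Longrightarrow> gv \<bullet> x \<le> 0" and lin: "linear \<psi>"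
    and van: "\<And>x. x \<in> K \<Longrightarrow> gv \<bullet> x = 0 \<Longrightarrow> \<psi> x = 0"
  shows "\<exists>C. \<forall>x\<in>K. \<bar>\<psi> x\<bar> \<le> C * (- (gv \<bullet> x))"
proof -
  define B :: "(real^'n) set" where "B = cbox (- (\<chi> i. 1)) (\<chi> i. 1)"
  define P where "P = K \<inter> B"
  have "polyhedron P" unfolding P_def B_def by (intro polyhedron_Int polyK polyhedron_interval)
  moreover have "bounded P" unfolding P_def B_def by auto
  ultimately have "polytope P" by (simp add: polytope_eq_bounded_polyhedron)
  then obtain V where V: "finite V" "P = convex hull V" unfolding polytope_def by blast
  have VK: "V \<subseteq> K" using V(2) hull_subset[of V convex] unfolding P_def by blast
  define r where "r v = (if gv \<bullet> v = 0 then 0 else \<bar>\<psi> v\<bar> / (- (gv \<bullet> v)))" for v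
  define C where "C = (\<Sum>v\<in>V. r v)"
  have rnn: "0 \<le> r v" if vV: "v \<in> V" for v
  proof (cases "gv \<bullet> v = 0")
    case False
    then have "0 < - (gv \<bullet> v)" using g[of v] VK vV by force
    then show ?thesis unfolding r_def using False divide_nonneg_neg[of "\<bar>\<psi> v\<bar>" "gv \<bullet> v"] by simp
  qed (simp add: r_def)
  have keyv: "\<bar>\<psi> v\<bar> \<le> C * (- (gv \<bullet> v))" if v: "v \<in> V" for v
  proof (cases "gv \<bullet> v = 0")
    case True
    then show ?thesis using van[of v] VK v by auto
  next
    case False
    then have neg: "0 < - (gv \<bullet> v)" using g[of v] VK v by force
    have "\<bar>\<psi> v\<bar> = r v * (- (gv \<bullet> v))" unfolding r_def using False neg by simp
    also have "\<dots> \<le> C * (- (gv \<bullet> v))"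
    proof (rule mult_right_mono)
      show "r v \<le> C" unfolding C_def by (rule member_le_sum[OF v]) (use rnn V(1) in auto)
    qed (use neg in simp)
    finally show ?thesis .
  qed
  have keyP: "\<bar>\<psi> q\<bar> \<le> C * (- (gv \<bullet> q))" if q: "q \<in> P" for q
  proof -
    obtain u where u: "\<forall>x\<in>V. 0 \<le> u x" "sum u V = 1" "(\<Sum>x\<in>V. u x *\<^sub>R x) = q"
      using q V convex_hull_finite[OF V(1)] by auto
    have "\<psi> q = (\<Sum>x\<in>V. u x * \<psi> x)"
      using u(3) lin by (auto simp: linear_sum linear_scale)
    then have "\<bar>\<psi> q\<bar> \<le> (\<Sum>x\<in>V. u x * \<bar>\<psi> x\<bar>)"
      using u(1) by (auto intro: order.trans[OF sum_abs] simp: abs_mult)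
    also have "\<dots> \<le> (\<Sum>x\<in>V. u x * (C * (- (gv \<bullet> x))))"
    proof (rule sum_mono)
      fix v assume v: "v \<in> V"
      show "u v * \<bar>\<psi> v\<bar> \<le> u v * (C * (- (gv \<bullet> v)))"
        by (rule mult_left_mono[OF keyv[OF v]]) (use u(1) v in auto)
    qed
    also have "\<dots> = C * (- (gv \<bullet> q))"
      using u(3)[symmetric] by (simp add: inner_sum_right sum_distrib_left algebra_simps sum_negf)
    finally show ?thesis .
  qed
  have "\<bar>\<psi> x\<bar> \<le> C * (- (gv \<bullet> x))" if x: "x \<in> K" for x
  proof (cases "x = 0")
    case True then show ?thesis using lin by (simp add: linear_0)
  next
    case False
    define n where "n = norm x"
    have n: "0 < n" using False by (simp add: n_def)
    define q where "q = (1 / n) *\<^sub>R x"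
    have qK: "q \<in> K" unfolding q_def by (rule cone[OF x]) (use n in simp)
    have nq: "norm q = 1" using n unfolding q_def n_def by simp
    have "q \<in> B" unfolding B_def mem_box_cart
      using component_le_norm_cart[of q] nq by (auto simp: abs_le_iff)
    then have qP: "q \<in> P" using qK unfolding P_def by simp
    have xq: "x = n *\<^sub>R q" using n unfolding q_def by simp
    have "\<psi> x = n * \<psi> q" using lin xq by (simp add: linear_scale)
    then have e1: "\<bar>\<psi> x\<bar> = n * \<bar>\<psi> q\<bar>" using n by (simp add: abs_mult)
    have "gv \<bullet> x = n * (gv \<bullet> q)" using xq by simp
    then have e2: "C * (- (gv \<bullet> x)) = n * (C * (- (gv \<bullet> q)))" by (simp add: algebra_simps)
    have "n * \<bar>\<psi> q\<bar> \<le> n * (C * (- (gv \<bullet> q)))"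
      by (rule mult_left_mono[OF keyP[OF qP]]) (use n in simp)
    then show ?thesis using e1 e2 by linarith
  qed
  then show ?thesis by blast
qed


definition Zf :: "('a::finite \<Rightarrow> real^'d::finite) \<Rightarrow> 'a set \<Rightarrow> real^'a \<Rightarrow> real^'d \<Rightarrow> real^'a" where
  "Zf pts F w \<xi> = (\<chi> a. if a \<in> F then w$a * exp (pts a \<bullet> \<xi>) / (\<Sum>f\<in>F. w$f * exp (pts f \<bullet> \<xi>)) else 0)"

lemma monom_exp:
  fixes pts :: "'a \<Rightarrow> real^'d::finite"
  assumes "\<forall>j. 0 < x$j"
  shows "monom pts x a = exp (pts a \<bullet> (\<chi> j. ln (x$j)))"
  unfolding monom_def by (simp add: exp_sum[symmetric] inner_vec_def)

lemma Xo_eq: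
  fixes pts :: "'a::finite \<Rightarrow> real^'d::finite"
  shows "Xo pts F w = range (Zf pts F w)"
proof (intro set_eqI iffI)
  fix z assume "z \<in> Xo pts F w"
  then obtain x where x: "\<forall>j. 0 < x$j"
    and z: "z = (\<chi> a. if a \<in> F then w$a * monom pts x a / (\<Sum>f\<in>F. w$f * monom pts x f) else 0)"
    unfolding Xo_def by blast
  have "z = Zf pts F w (\<chi> j. ln (x$j))" unfolding z Zf_def monom_exp[OF x] by simp
  then show "z \<in> range (Zf pts F w)" by blast
next
  fix z assume "z \<in> range (Zf pts F w)"
  then obtain \<xi> where z: "z = Zf pts F w \<xi>" by blast
  define x :: "real^'d" where "x = (\<chi> j. exp (\<xi>$j))"
  have x: "\<forall>j. 0 < x$j" by (simp add: x_def)
  have eqx: "(\<chi> j. ln (x$j)) = \<xi>" by (simp add: x_def vec_eq_iff)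
  have "z = (\<chi> a. if a \<in> F then w$a * monom pts x a / (\<Sum>f\<in>F. w$f * monom pts x f) else 0)"
    unfolding z Zf_def monom_exp[OF x] eqx by simp
  then show "z \<in> Xo pts F w" unfolding Xo_def using x by blast
qed

lemma TF_pos:
  fixes pts :: "'a::finite \<Rightarrow> real^'d::finite"
  assumes "F \<noteq> {}" "\<And>a. 0 < w$a"
  shows "0 < (\<Sum>f\<in>F. w$f * exp (pts f \<bullet> \<xi>))"
  using assms by (intro sum_pos) auto

lemma proj_Z:
  fixes pts :: "'a::finite \<Rightarrow> real^'d::finite"
  assumes F: "F \<noteq> {}" and w: "\<And>a. 0 < w$a"
  shows "proj_face F (Zf pts UNIV w \<xi>) = Zf pts F w \<xi>"
proof -
  define e where "e a = w$a * exp (pts a \<bullet> \<xi>)" for a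
  define TU where "TU = (\<Sum>f\<in>UNIV. e f)"
  define TF where "TF = (\<Sum>f\<in>F. e f)"
  have TU: "0 < TU" unfolding TU_def e_def using TF_pos[where F=UNIV and w=w and pts=pts and \<xi>=\<xi>] w by simp
  have TF: "0 < TF" unfolding TF_def e_def by (rule TF_pos[where pts=pts and \<xi>=\<xi>, OF F w])
  have s: "(\<Sum>f\<in>F. Zf pts UNIV w \<xi> $ f) = TF / TU"
    by (simp add: Zf_def e_def[symmetric] TU_def[symmetric] TF_def sum_divide_distrib)
  show ?thesis
    unfolding proj_face_def
  proof (subst vec_eq_iff, intro allI)
    fix a
    show "(\<chi> a. if a \<in> F then Zf pts UNIV w \<xi> $ a / (\<Sum>f\<in>F. Zf pts UNIV w \<xi> $ f) else 0) $ a = Zf pts F w \<xi> $ a"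
      unfolding s using TU TF
      by (simp add: Zf_def e_def[symmetric] TU_def[symmetric] TF_def[symmetric])
  qed
qed

lemma Z_eq:
  fixes pts :: "'a::finite \<Rightarrow> real^'d::finite"
  assumes inj: "inj pts" and sp: "spans pts F" and w: "\<And>a. 0 < w$a"
    and eq: "Zf pts F w \<xi> = Zf pts F w \<xi>'"
  shows "Zf pts UNIV w \<xi> = Zf pts UNIV w \<xi>'"
proof -
  have F: "F \<noteq> {}" using sp spans_nonempty by blast
  define T where "T = (\<Sum>f\<in>F. w$f * exp (pts f \<bullet> \<xi>))"
  define T' where "T' = (\<Sum>f\<in>F. w$f * exp (pts f \<bullet> \<xi>'))"
  have T: "0 < T" "0 < T'" unfolding T_def T'_def using TF_pos[OF F w] by auto
  define L where "L = ln (T / T')"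
  have onF: "(\<xi> - \<xi>') \<bullet> pts f + (- L) = 0 \<bullet> pts f + 0" if f: "f \<in> F" for f
  proof -
    have "Zf pts F w \<xi> $ f = Zf pts F w \<xi>' $ f" using eq by simp
    then have "w$f * exp (pts f \<bullet> \<xi>) / T = w$f * exp (pts f \<bullet> \<xi>') / T'"
      using f by (simp add: Zf_def T_def T'_def)
    then have "exp (pts f \<bullet> \<xi>) * T' = exp (pts f \<bullet> \<xi>') * T" using T w[of f]
      by (simp add: field_simps)
    then have "exp (pts f \<bullet> \<xi>) = exp (pts f \<bullet> \<xi>') * (T / T')" using T by (simp add: field_simps)
    then have "exp (pts f \<bullet> \<xi> - pts f \<bullet> \<xi>') = T / T'" by (simp add: exp_diff field_simps)
    then have "pts f \<bullet> \<xi> - pts f \<bullet> \<xi>' = L" unfolding L_def by (metis ln_exp)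
    then have "(\<xi> - \<xi>') \<bullet> pts f = L" by (metis inner_commute inner_diff_left)
    then show ?thesis by simp
  qed
  have all: "(\<xi> - \<xi>') \<bullet> pts a + (- L) = 0 \<bullet> pts a + 0" for a
    by (rule agree[OF inj sp onF])
  have ea: "exp (pts a \<bullet> \<xi>) = exp L * exp (pts a \<bullet> \<xi>')" for a
  proof -
    have "(\<xi> - \<xi>') \<bullet> pts a = L" using all[of a] by simp
    then have "pts a \<bullet> \<xi> - pts a \<bullet> \<xi>' = L" by (metis inner_commute inner_diff_left)
    then have "pts a \<bullet> \<xi> = L + pts a \<bullet> \<xi>'" by simp
    then show ?thesis by (simp add: exp_add)
  qed
  show ?thesis
  proof (subst vec_eq_iff, intro allI)
    fix a
    have "(\<Sum>f\<in>UNIV. w$f * exp (pts f \<bullet> \<xi>)) = exp L * (\<Sum>f\<in>UNIV. w$f * exp (pts f \<bullet> \<xi>'))"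
      by (simp add: ea sum_distrib_left algebra_simps)
    then show "Zf pts UNIV w \<xi> $ a = Zf pts UNIV w \<xi>' $ a"
      by (simp add: Zf_def ea)
  qed
qed


definition Lin :: "('a::finite \<Rightarrow> real^'d::finite) \<Rightarrow> 'a set \<Rightarrow> 'a \<Rightarrow> real^'d \<Rightarrow> real^'a" where
  "Lin pts F f0 \<xi> = (\<chi> f. if f \<in> F then (pts f - pts f0) \<bullet> \<xi> else 0)"

lemma subspace_Lin: "subspace (range (Lin pts F f0))"
proof -
  have z: "0 \<in> range (Lin pts F f0)"
    by (rule image_eqI[of _ _ 0]) (auto simp: Lin_def vec_eq_iff)
  have a: "x + y \<in> range (Lin pts F f0)" if hx: "x \<in> range (Lin pts F f0)" and hy: "y \<in> range (Lin pts F f0)" for x y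
  proof -
    obtain \<xi>1 where 1: "x = Lin pts F f0 \<xi>1" using hx by blast
    obtain \<xi>2 where 2: "y = Lin pts F f0 \<xi>2" using hy by blast
    have "x + y = Lin pts F f0 (\<xi>1 + \<xi>2)" unfolding 1 2 by (auto simp: Lin_def vec_eq_iff inner_add_right)
    then show ?thesis by blast
  qed
  have s: "r *\<^sub>R x \<in> range (Lin pts F f0)" if hx: "x \<in> range (Lin pts F f0)" for x r
  proof -
    obtain \<xi>1 where 1: "x = Lin pts F f0 \<xi>1" using hx by blast
    have "r *\<^sub>R x = Lin pts F f0 (r *\<^sub>R \<xi>1)" unfolding 1 by (auto simp: Lin_def vec_eq_iff)
    then show ?thesis by blast
  qed
  show ?thesis unfolding subspace_def using z a s by blast
qed

lemma closure_Z:
  fixes pts :: "'a::finite \<Rightarrow> real^'d::finite"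
  assumes f0: "f0 \<in> F" and w: "\<And>a. 0 < w$a"
    and ycl: "y \<in> closure (range (Zf pts F w))" and ys: "y \<in> simplex_face F"
    and ypos: "\<And>f. f \<in> F \<Longrightarrow> 0 < y$f"
  shows "y \<in> range (Zf pts F w)"
proof -
  have F: "F \<noteq> {}" using f0 by auto
  define \<Phi> :: "real^'a \<Rightarrow> real^'a" where
    "\<Phi> z = (\<chi> f. if f \<in> F then ln (z$f) - ln (z$f0) - (ln (w$f) - ln (w$f0)) else 0)" for z
  have PhiZ: "\<Phi> (Zf pts F w \<xi>) = Lin pts F f0 \<xi>" for \<xi>
  proof -
    define T where "T = (\<Sum>f\<in>F. w$f * exp (pts f \<bullet> \<xi>))"
    have T: "0 < T" unfolding T_def by (rule TF_pos[OF F w])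
    have lnz: "ln (Zf pts F w \<xi> $ f) = ln (w$f) + pts f \<bullet> \<xi> - ln T" if "f \<in> F" for f
      using that T w[of f] by (simp add: Zf_def T_def[symmetric] ln_div ln_mult)
    show ?thesis
      by (auto simp: vec_eq_iff \<Phi>_def Lin_def lnz f0 inner_diff_left)
  qed
  obtain s where s: "\<And>n. s n \<in> range (Zf pts F w)" "s \<longlonglongrightarrow> y"
    using ycl closure_sequential by blast
  have tl: "(\<lambda>n. \<Phi> (s n)) \<longlonglongrightarrow> \<Phi> y"
  proof (rule vec_tendstoI)
    fix f
    show "(\<lambda>n. \<Phi> (s n) $ f) \<longlonglongrightarrow> \<Phi> y $ f"
    proof (cases "f \<in> F")
      case True
      have "(\<lambda>n. s n $ f) \<longlonglongrightarrow> y $ f" "(\<lambda>n. s n $ f0) \<longlonglongrightarrow> y $ f0"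
        using s(2) by (auto intro: tendsto_vec_nth)
      then have "(\<lambda>n. ln (s n $ f) - ln (s n $ f0) - (ln (w$f) - ln (w$f0))) \<longlonglongrightarrow>
                 ln (y $ f) - ln (y $ f0) - (ln (w$f) - ln (w$f0))"
        using ypos[OF True] ypos[OF f0] w[of f] w[of f0] by (intro tendsto_diff tendsto_ln) auto
      then show ?thesis using True by (simp add: \<Phi>_def)
    next
      case False then show ?thesis by (simp add: \<Phi>_def)
    qed
  qed
  have mem: "\<Phi> (s n) \<in> range (Lin pts F f0)" for n
    using s(1)[of n] PhiZ by auto
  have "\<Phi> y \<in> range (Lin pts F f0)"
    by (rule closed_sequentially[OF closed_subspace[OF subspace_Lin] mem tl])
  then obtain \<xi> where xi: "\<Phi> y = Lin pts F f0 \<xi>" by blast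
  define e where "e f = w$f * exp (pts f \<bullet> \<xi>)" for f
  define T where "T = (\<Sum>f\<in>F. e f)"
  have T: "0 < T" unfolding T_def e_def by (rule TF_pos[OF F w])
  define K where "K = y$f0 / e f0"
  have epos: "0 < e f" for f using w[of f] by (simp add: e_def)
  have yK: "y$f = K * e f" if f: "f \<in> F" for f
  proof -
    have "\<Phi> y $ f = Lin pts F f0 \<xi> $ f" using xi by simp
    then have "ln (y$f) - ln (y$f0) - (ln (w$f) - ln (w$f0)) = (pts f - pts f0) \<bullet> \<xi>"
      using f by (simp add: \<Phi>_def Lin_def)
    then have "ln (y$f) = ln (y$f0) + (ln (w$f) + pts f \<bullet> \<xi>) - (ln (w$f0) + pts f0 \<bullet> \<xi>)"
      by (simp add: inner_diff_left)
    also have "\<dots> = ln (y$f0) + ln (e f) - ln (e f0)"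
      using w[of f] w[of f0] by (simp add: e_def ln_mult)
    finally have "y$f = exp (ln (y$f0) + ln (e f) - ln (e f0))"
      using ypos[OF f] by (metis exp_ln)
    also have "\<dots> = y$f0 * e f / e f0"
      using ypos[OF f0] epos by (simp add: exp_diff exp_add)
    finally show ?thesis unfolding K_def by simp
  qed
  have sumy: "(\<Sum>f\<in>F. y$f) = 1"
  proof -
    have "(\<Sum>f\<in>UNIV. y$f) = 1" using ys by (simp add: simplex_face_def)
    moreover have "(\<Sum>f\<in>UNIV. y$f) = (\<Sum>f\<in>F. y$f)"
      using ys by (intro sum.mono_neutral_right) (auto simp: simplex_face_def)
    ultimately show ?thesis by simp
  qed
  have "K * T = 1" using sumy yK by (simp add: T_def sum_distrib_left)
  then have KT: "K = 1 / T" using T by (simp add: field_simps)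
  have "Zf pts F w \<xi> = y"
  proof (subst vec_eq_iff, intro allI)
    fix f show "Zf pts F w \<xi> $ f = y $ f"
    proof (cases "f \<in> F")
      case True
      then show ?thesis using yK[OF True] KT by (simp add: Zf_def e_def[symmetric] T_def[symmetric])
    next
      case False
      then show ?thesis using ys by (simp add: Zf_def simplex_face_def)
    qed
  qed
  then show ?thesis by blast
qed


lemma dist_Z:
  fixes pts :: "'a::finite \<Rightarrow> real^'d::finite"
  assumes F: "F \<noteq> {}" and w: "\<And>a. 0 < w$a"
  shows "l1dist (Zf pts F w \<xi>) (Zf pts UNIV w \<xi>) \<le>
         2 * (\<Sum>a\<in>-F. w$a * exp (pts a \<bullet> \<xi>) / (\<Sum>f\<in>F. w$f * exp (pts f \<bullet> \<xi>)))"
proof -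
  define e where "e a = w$a * exp (pts a \<bullet> \<xi>)" for a
  define TF where "TF = (\<Sum>f\<in>F. e f)"
  define R where "R = (\<Sum>a\<in>-F. e a)"
  have epos: "0 < e a" for a using w[of a] by (simp add: e_def)
  have TF: "0 < TF" unfolding TF_def using F epos by (intro sum_pos) auto
  have R: "0 \<le> R" unfolding R_def using epos by (intro sum_nonneg) (auto intro: less_imp_le)
  have split: "(\<Sum>a\<in>UNIV. g a) = (\<Sum>a\<in>F. g a) + (\<Sum>a\<in>-F. g a)" for g :: "'a \<Rightarrow> real"
  proof -
    have "UNIV = F \<union> -F" by auto
    then have "(\<Sum>a\<in>UNIV. g a) = (\<Sum>a\<in>F \<union> -F. g a)" by simp
    also have "\<dots> = (\<Sum>a\<in>F. g a) + (\<Sum>a\<in>-F. g a)" by (rule sum.union_disjoint) auto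
    finally show ?thesis .
  qed
  define TU where "TU = TF + R"
  have TUe: "(\<Sum>a\<in>UNIV. e a) = TU" unfolding TU_def TF_def R_def by (rule split)
  have TU: "0 < TU" unfolding TU_def using TF R by simp
  have yv: "Zf pts F w \<xi> $ a = (if a \<in> F then e a / TF else 0)" for a
    by (simp add: Zf_def e_def[symmetric] TF_def)
  have zv: "Zf pts UNIV w \<xi> $ a = e a / TU" for a
    by (simp add: Zf_def e_def[symmetric] TUe)
  have "l1dist (Zf pts F w \<xi>) (Zf pts UNIV w \<xi>) = (\<Sum>a\<in>UNIV. \<bar>Zf pts F w \<xi> $ a - Zf pts UNIV w \<xi> $ a\<bar>)"
    by (simp add: l1dist_def)
  also have "\<dots> = (\<Sum>a\<in>F. e a / TF - e a / TU) + (\<Sum>a\<in>-F. e a / TU)"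
  proof -
    have "(\<Sum>a\<in>F. \<bar>Zf pts F w \<xi> $ a - Zf pts UNIV w \<xi> $ a\<bar>) = (\<Sum>a\<in>F. e a / TF - e a / TU)"
    proof (rule sum.cong[OF refl])
      fix a assume a: "a \<in> F"
      have "e a / TU \<le> e a / TF"
        using epos[of a] TF R unfolding TU_def by (intro divide_left_mono) auto
      then show "\<bar>Zf pts F w \<xi> $ a - Zf pts UNIV w \<xi> $ a\<bar> = e a / TF - e a / TU"
        using a by (simp add: yv zv)
    qed
    moreover have "(\<Sum>a\<in>-F. \<bar>Zf pts F w \<xi> $ a - Zf pts UNIV w \<xi> $ a\<bar>) = (\<Sum>a\<in>-F. e a / TU)"
    proof (rule sum.cong[OF refl])
      fix a assume "a \<in> -F"
      then show "\<bar>Zf pts F w \<xi> $ a - Zf pts UNIV w \<xi> $ a\<bar> = e a / TU"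
        using epos[of a] TU by (simp add: yv zv)
    qed
    ultimately show ?thesis by (simp add: split)
  qed
  also have "\<dots> = (1 - TF / TU) + R / TU"
    using TF by (simp add: sum_subtractf sum_divide_distrib[symmetric] TF_def[symmetric] R_def[symmetric])
  also have "\<dots> = 2 * R / TU"
  proof -
    have "1 - TF / TU = (TU - TF) / TU" using TU by (simp add: diff_divide_distrib)
    also have "\<dots> = R / TU" unfolding TU_def by simp
    finally show ?thesis by simp
  qed
  also have "\<dots> \<le> 2 * R / TF"
    using R TF TU unfolding TU_def by (intro divide_left_mono) auto
  also have "\<dots> = 2 * (R / TF)" by simp
  also have "R / TF = (\<Sum>a\<in>-F. e a / TF)" unfolding R_def by (rule sum_divide_distrib)
  finally show ?thesis by (simp add: e_def TF_def)
qed

lemma ratio_bound: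
  fixes pts :: "'a::finite \<Rightarrow> real^'d::finite"
  assumes F: "F \<noteq> {}" and w: "\<And>a. 0 < w$a"
    and U: "sum U F = 1" "(\<Sum>f\<in>F. U f *\<^sub>R pts f) = pts a"
    and d: "0 < \<delta>" and yd: "\<And>f. f \<in> F \<Longrightarrow> \<delta> \<le> Zf pts F w \<xi> $ f"
  shows "w$a * exp (pts a \<bullet> \<xi>) / (\<Sum>f\<in>F. w$f * exp (pts f \<bullet> \<xi>))
         \<le> exp ((ln (w$a) - (\<Sum>f\<in>F. U f * ln (w$f))) + (\<Sum>f\<in>F. \<bar>U f\<bar>) * \<bar>ln \<delta>\<bar>)"
proof -
  define e where "e a = w$a * exp (pts a \<bullet> \<xi>)" for a
  define TF where "TF = (\<Sum>f\<in>F. e f)"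
  have epos: "0 < e a" for a using w[of a] by (simp add: e_def)
  have TF: "0 < TF" unfolding TF_def using F epos by (intro sum_pos) auto
  have y: "Zf pts F w \<xi> $ f = e f / TF" if "f \<in> F" for f
    using that by (simp add: Zf_def e_def[symmetric] TF_def)
  have lny: "ln (e f / TF) = ln (w$f) + pts f \<bullet> \<xi> - ln TF" for f
    using epos[of f] TF w[of f] by (simp add: ln_div e_def ln_mult)
  have absln: "\<bar>ln (e f / TF)\<bar> \<le> \<bar>ln \<delta>\<bar>" if f: "f \<in> F" for f
  proof -
    have le1: "e f / TF \<le> 1"
    proof -
      have "e f \<le> TF" unfolding TF_def by (rule member_le_sum[OF f]) (use epos in \<open>auto intro: less_imp_le\<close>)
      then show ?thesis using TF by simp
    qed
    have ge: "\<delta> \<le> e f / TF" using yd[OF f] y[OF f] by simp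
    have "ln \<delta> \<le> ln (e f / TF)" using ge d by simp
    moreover have "ln (e f / TF) \<le> 0" using le1 epos[of f] TF by simp
    ultimately show ?thesis by linarith
  qed
  have pa: "pts a \<bullet> \<xi> = (\<Sum>f\<in>F. U f * (pts f \<bullet> \<xi>))"
    using U(2)[symmetric] by (simp add: inner_sum_left)
  have "ln (e a / TF) = ln (w$a) + pts a \<bullet> \<xi> - ln TF" by (rule lny)
  also have "\<dots> = ln (w$a) + (\<Sum>f\<in>F. U f * (ln (e f / TF) - ln (w$f) + ln TF)) - ln TF"
    unfolding pa lny by simp
  also have "\<dots> = (ln (w$a) - (\<Sum>f\<in>F. U f * ln (w$f))) + (\<Sum>f\<in>F. U f * ln (e f / TF))"
  proof -
    have "(\<Sum>f\<in>F. U f * (ln (e f / TF) - ln (w$f) + ln TF)) =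
          (\<Sum>f\<in>F. U f * ln (e f / TF)) - (\<Sum>f\<in>F. U f * ln (w$f)) + (\<Sum>f\<in>F. U f) * ln TF"
    proof -
      have "(\<Sum>f\<in>F. U f * (ln (e f / TF) - ln (w$f) + ln TF)) =
            (\<Sum>f\<in>F. U f * ln (e f / TF) - U f * ln (w$f) + U f * ln TF)"
        by (simp add: algebra_simps)
      also have "\<dots> = (\<Sum>f\<in>F. U f * ln (e f / TF)) - (\<Sum>f\<in>F. U f * ln (w$f)) + (\<Sum>f\<in>F. U f * ln TF)"
        by (simp add: sum.distrib sum_subtractf)
      also have "(\<Sum>f\<in>F. U f * ln TF) = (\<Sum>f\<in>F. U f) * ln TF" by (rule sum_distrib_right[symmetric])
      finally show ?thesis .
    qed
    then show ?thesis using U(1) by simp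
  qed
  also have "\<dots> \<le> (ln (w$a) - (\<Sum>f\<in>F. U f * ln (w$f))) + (\<Sum>f\<in>F. \<bar>U f\<bar>) * \<bar>ln \<delta>\<bar>"
  proof -
    have "(\<Sum>f\<in>F. U f * ln (e f / TF)) \<le> (\<Sum>f\<in>F. \<bar>U f\<bar> * \<bar>ln \<delta>\<bar>)"
    proof (rule sum_mono)
      fix f assume f: "f \<in> F"
      have "U f * ln (e f / TF) \<le> \<bar>U f\<bar> * \<bar>ln (e f / TF)\<bar>" by (simp add: abs_mult[symmetric])
      also have "\<dots> \<le> \<bar>U f\<bar> * \<bar>ln \<delta>\<bar>" by (rule mult_left_mono[OF absln[OF f]]) simp
      finally show "U f * ln (e f / TF) \<le> \<bar>U f\<bar> * \<bar>ln \<delta>\<bar>" .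
    qed
    then show ?thesis by (simp add: sum_distrib_right)
  qed
  finally have "ln (e a / TF) \<le> (ln (w$a) - (\<Sum>f\<in>F. U f * ln (w$f))) + (\<Sum>f\<in>F. \<bar>U f\<bar>) * \<bar>ln \<delta>\<bar>" .
  then have "exp (ln (e a / TF)) \<le> exp ((ln (w$a) - (\<Sum>f\<in>F. U f * ln (w$f))) + (\<Sum>f\<in>F. \<bar>U f\<bar>) * \<bar>ln \<delta>\<bar>)"
    by (simp only: exp_le_cancel_iff)
  moreover have "exp (ln (e a / TF)) = e a / TF" using epos[of a] TF by simp
  ultimately have "e a / TF \<le> exp ((ln (w$a) - (\<Sum>f\<in>F. U f * ln (w$f))) + (\<Sum>f\<in>F. \<bar>U f\<bar>) * \<bar>ln \<delta>\<bar>)"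
    by simp
  then show ?thesis by (simp only: e_def TF_def)
qed


lemma diverge:
  fixes v u vbar :: "nat \<Rightarrow> real^'a::finite" and \<sigma> \<tau> :: "(real^'a) set" and gv lam :: "real^'a"
  assumes polyS: "polyhedron \<sigma>" and coneS: "\<And>x t. x \<in> \<sigma> \<Longrightarrow> 0 < t \<Longrightarrow> t *\<^sub>R x \<in> \<sigma>"
    and zeroS: "0 \<in> \<sigma>" and face: "\<sigma> face_of \<tau>"
    and gle: "\<And>x. x \<in> \<sigma> \<Longrightarrow> gv \<bullet> x \<le> 0" and lam: "lam \<in> \<sigma>" "gv \<bullet> lam < 0"
    and sigma_min: "\<And>r. strict_mono r \<Longrightarrow> min_face_bdd \<tau> \<sigma> (v \<circ> r)"
    and u_in: "\<And>i. u i \<in> \<sigma>" and decomp: "\<And>i. v i = u i + vbar i"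
    and vbar_lim: "vbar \<longlonglongrightarrow> vlim"
  shows "\<exists>N. \<forall>i>N. gv \<bullet> v i \<le> - M"
proof (rule ccontr)
  assume "\<not> (\<exists>N. \<forall>i>N. gv \<bullet> v i \<le> - M)"
  then have "\<forall>N. \<exists>i>N. i \<in> {i. gv \<bullet> v i > - M}" by (auto simp: not_le)
  then have "infinite {i. gv \<bullet> v i > - M}" by (simp add: infinite_nat_iff_unbounded)
  then obtain r :: "nat \<Rightarrow> nat" where r: "strict_mono r" "\<And>n. r n \<in> {i. gv \<bullet> v i > - M}"
    using infinite_enumerate by blast
  have mfb: "min_face_bdd \<tau> \<sigma> (v \<circ> r)" by (rule sigma_min[OF r(1)])
  define \<sigma>' where "\<sigma>' = \<sigma> \<inter> {x. gv \<bullet> x = 0}"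
  have cvx: "convex \<sigma>" by (rule polyhedron_imp_convex[OF polyS])
  have "\<sigma>' face_of \<sigma>" unfolding \<sigma>'_def
    by (rule face_of_Int_supporting_hyperplane_le[OF cvx]) (use gle in auto)
  then have f': "\<sigma>' face_of \<tau>" using face by (rule face_of_trans)
  have "0 \<in> \<sigma>'" unfolding \<sigma>'_def using zeroS by simp
  then have cf: "cone_face \<sigma>' \<tau>" unfolding cone_face_def using f' by blast
  have fb: "face_bounded \<sigma>' (v \<circ> r)" unfolding face_bounded_def
  proof (intro allI impI)
    fix \<psi> :: "real^'a \<Rightarrow> real" assume h: "linear \<psi> \<and> (\<forall>x\<in>\<sigma>'. \<psi> x = 0)"
    obtain C where C: "\<forall>x\<in>\<sigma>. \<bar>\<psi> x\<bar> \<le> C * (- (gv \<bullet> x))"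
      using poly_bound[OF polyS coneS gle, of \<psi>] h unfolding \<sigma>'_def by blast
    obtain Kp where Kp: "Kp > 0" "\<And>x. norm (\<psi> x) \<le> Kp * norm x"
      using linear_bounded_pos h by blast
    have "bounded (range vbar)" by (rule convergent_imp_bounded[OF vbar_lim])
    then obtain Bv where Bv: "\<And>i. norm (vbar i) \<le> Bv" unfolding bounded_iff by blast
    define W where "W = M + norm gv * Bv"
    have bnd: "\<bar>\<psi> (v (r n))\<bar> \<le> \<bar>C\<bar> * W + Kp * Bv" for n
    proof -
      have ui: "u (r n) \<in> \<sigma>" by (rule u_in)
      have "gv \<bullet> vbar (r n) \<le> norm gv * norm (vbar (r n))"
        by (metis Cauchy_Schwarz_ineq2 abs_le_iff)
      also have "\<dots> \<le> norm gv * Bv" by (rule mult_left_mono[OF Bv]) simp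
      finally have gvb: "gv \<bullet> vbar (r n) \<le> norm gv * Bv" .
      have "gv \<bullet> v (r n) > - M" using r(2)[of n] by simp
      then have "- (gv \<bullet> u (r n)) < W"
        using gvb decomp[of "r n"] unfolding W_def by (simp add: inner_add_right)
      moreover have nn: "0 \<le> - (gv \<bullet> u (r n))" using gle[OF ui] by simp
      ultimately have "C * (- (gv \<bullet> u (r n))) \<le> \<bar>C\<bar> * W"
        by (smt (verit, best) abs_ge_self abs_mult_pos mult_left_mono mult_mono)
      then have pu: "\<bar>\<psi> (u (r n))\<bar> \<le> \<bar>C\<bar> * W" using C ui by fastforce
      have pv: "\<bar>\<psi> (vbar (r n))\<bar> \<le> Kp * Bv"
      proof -
        have "Kp * norm (vbar (r n)) \<le> Kp * Bv" by (rule mult_left_mono[OF Bv]) (use Kp(1) in simp)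
        then show ?thesis using Kp(2)[of "vbar (r n)"] by simp
      qed
      have "\<psi> (v (r n)) = \<psi> (u (r n)) + \<psi> (vbar (r n))"
        using h decomp[of "r n"] by (simp add: linear_add)
      then show ?thesis using pu pv by linarith
    qed
    show "bounded (range (\<lambda>i. \<psi> ((v \<circ> r) i)))"
      unfolding bounded_iff using bnd by auto
  qed
  have "\<sigma> \<subseteq> \<sigma>'" using mfb cf fb unfolding min_face_bdd_def by blast
  then have "gv \<bullet> lam = 0" using lam(1) unfolding \<sigma>'_def by blast
  then show False using lam(2) by simp
qed

theorem mainTheorem13:
  fixes pts :: "'a::finite \<Rightarrow> real^'d::finite"
    and w :: "nat \<Rightarrow> real^'a" and v u vbar :: "nat \<Rightarrow> real^'a" and vlim :: "real^'a"
    and \<tau> \<sigma> :: "(real^'a) set" and F :: "'a set" and \<delta> \<epsilon> :: real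
  assumes inj_pts: "inj pts"
    and spans: "affine hull (range pts) = UNIV"
    and w_pos: "\<And>i a. 0 < w i $ a"
    and v_def: "\<And>i. v i = (\<chi> a. ln (w i $ a))"
    and tau_fan: "\<tau> \<in> secondary_fan pts"
    and v_in_tau: "\<And>i. v i \<in> \<tau>"
    and proper_faces: "\<And>\<phi>. cone_face \<phi> \<tau> \<Longrightarrow> \<phi> \<noteq> \<tau> \<Longrightarrow> finite {i. v i \<in> \<phi>}"
    and sigma_face: "cone_face \<sigma> \<tau>"
    and sigma_min: "\<And>r. strict_mono r \<Longrightarrow> min_face_bdd \<tau> \<sigma> (v \<circ> r)"
    and u_in: "\<And>i. u i \<in> \<sigma>"
    and decomp: "\<And>i. v i = u i + vbar i"
    and vbar_lim: "vbar \<longlonglongrightarrow> vlim"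
    and facet: "is_facet pts (cone_subdiv pts \<sigma>) F"
    and delta_pos: "0 < \<delta>" and eps_pos: "0 < \<epsilon>"
  shows "\<exists>N. \<forall>i>N. \<forall>y \<in> Bdelta F \<delta> \<inter> Xcl pts F (w i).
           (\<exists>!z. z \<in> Xo pts UNIV (w i) \<and> proj_face F z = y) \<and>
           (\<forall>z. z \<in> Xo pts UNIV (w i) \<and> proj_face F z = y \<longrightarrow> l1dist y z < \<epsilon>)"
proof -
  obtain lam0 where tau: "\<tau> = closure {mu. reg_subdiv pts mu = reg_subdiv pts lam0}"
    using tau_fan unfolding secondary_fan_def by blast
  have sface: "\<sigma> face_of \<tau>" "\<sigma> \<noteq> {}" using sigma_face unfolding cone_face_def by auto
  obtain lam where lamS: "lam \<in> \<sigma>" and sigQ: "\<sigma> = Qset pts (reg_subdiv pts lam)"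
    and cs: "cone_subdiv pts \<sigma> = reg_subdiv pts lam"
    using fan_face[OF inj_pts spans tau sface] by blast
  define S where "S = reg_subdiv pts lam"
  have facS: "is_facet pts S F" using facet cs S_def by simp
  then have "fullcell pts lam F" using facet_iff[OF inj_pts] S_def by blast
  then obtain c b where cb: "valid pts lam c b" "F = tset pts lam c b" "spans pts F"
    by (rule fullcellE)
  have Fne: "F \<noteq> {}" using cb(3) spans_nonempty by blast
  have "\<forall>a. \<exists>U. sum U F = 1 \<and> (\<Sum>f\<in>F. U f *\<^sub>R pts f) = pts a"
    using spans_rep[OF inj_pts cb(3)] by blast
  then obtain U where U: "\<And>a. sum (U a) F = 1" "\<And>a. (\<Sum>f\<in>F. U a f *\<^sub>R pts f) = pts a" by metis
  define gv where "gv a = axis a 1 - (\<Sum>f\<in>F. U a f *\<^sub>R axis f (1::real))" for a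
  have gv_eval: "gv a \<bullet> x = x$a - (\<Sum>f\<in>F. U a f * x$f)" for a x
    by (simp add: gv_def inner_diff_left inner_sum_left inner_axis')
  have affU: "(\<Sum>f\<in>F. U a f * (c' \<bullet> pts f + b')) = c' \<bullet> pts a + b'" for a c' b'
    using aff_comb[of "U a" F c' pts b'] U[of a] by simp
  have gle: "gv a \<bullet> x \<le> 0" if x: "x \<in> \<sigma>" for a x
  proof -
    have "x \<in> Qset pts S" using x sigQ S_def by simp
    then obtain c' b' where v': "valid pts x c' b'" "F \<subseteq> tset pts x c' b'" by (rule QsetD[OF _ facS])
    have "(\<Sum>f\<in>F. U a f * x$f) = (\<Sum>f\<in>F. U a f * (c' \<bullet> pts f + b'))"
      using v'(2) by (intro sum.cong) (auto simp: tset_def)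
    also have "\<dots> = c' \<bullet> pts a + b'" by (rule affU)
    finally show ?thesis using v'(1) by (simp add: gv_eval valid_def)
  qed
  have glam: "gv a \<bullet> lam < 0" if a: "a \<in> -F" for a
  proof -
    have "(\<Sum>f\<in>F. U a f * lam$f) = (\<Sum>f\<in>F. U a f * (c \<bullet> pts f + b))"
      using cb(2) by (intro sum.cong) (auto simp: tset_def)
    also have "\<dots> = c \<bullet> pts a + b" by (rule affU)
    finally have e: "(\<Sum>f\<in>F. U a f * lam$f) = c \<bullet> pts a + b" .
    have "lam$a \<noteq> c \<bullet> pts a + b" using a cb(2) by (simp add: tset_def)
    moreover have "lam$a \<le> c \<bullet> pts a + b" using cb(1) by (simp add: valid_def)
    ultimately show ?thesis using e by (simp add: gv_eval)
  qed
  have polyS: "polyhedron \<sigma>" using sigQ polyhedron_Qset[OF inj_pts] by simp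
  have coneS: "t *\<^sub>R x \<in> \<sigma>" if "x \<in> \<sigma>" "0 < t" for x t
    using Qset_cone[of x pts "reg_subdiv pts lam" t] that sigQ by simp
  have zeroS: "0 \<in> \<sigma>" using zero_Qset sigQ by simp
  have div: "\<exists>N. \<forall>i>N. gv a \<bullet> v i \<le> - M" if a: "a \<in> -F" for a M
    by (rule diverge[OF polyS coneS zeroS sface(1) gle lamS glam[OF a] sigma_min u_in decomp vbar_lim])
  define n where "n = card (-F)"
  define Kd where "Kd a = (\<Sum>f\<in>F. \<bar>U a f\<bar>) * \<bar>ln \<delta>\<bar>" for a
  define tgt where "tgt = \<epsilon> / (4 * (real n + 1))"
  have tgt: "0 < tgt" unfolding tgt_def using eps_pos by simp
  have "\<forall>a\<in>-F. \<exists>N. \<forall>i>N. gv a \<bullet> v i \<le> - (Kd a - ln tgt)"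
    by (intro ballI div)
  then obtain Nf where Nf0: "\<forall>a\<in>-F. \<forall>i>Nf a. gv a \<bullet> v i \<le> - (Kd a - ln tgt)"
    by (rule bchoice[THEN exE])
  have Nf: "gv a \<bullet> v i \<le> - (Kd a - ln tgt)" if "a \<in> -F" "i > Nf a" for a i
    using Nf0 that by blast
  define N where "N = Max (insert 0 (Nf ` (-F)))"
  have NN: "Nf a \<le> N" if "a \<in> -F" for a unfolding N_def using that by (intro Max_ge) auto
  have small: "exp (gv a \<bullet> v i + Kd a) \<le> tgt" if a: "a \<in> -F" and i: "i > N" for a i
  proof -
    have "gv a \<bullet> v i \<le> - (Kd a - ln tgt)" using Nf[OF a] NN[OF a] i by simp
    then have "gv a \<bullet> v i + Kd a \<le> ln tgt" by simp
    then have "exp (gv a \<bullet> v i + Kd a) \<le> exp (ln tgt)" by simp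
    then show ?thesis using tgt by simp
  qed
  have "\<forall>i>N. \<forall>y \<in> Bdelta F \<delta> \<inter> Xcl pts F (w i).
           (\<exists>!z. z \<in> Xo pts UNIV (w i) \<and> proj_face F z = y) \<and>
           (\<forall>z. z \<in> Xo pts UNIV (w i) \<and> proj_face F z = y \<longrightarrow> l1dist y z < \<epsilon>)"
  proof (intro allI impI ballI)
    fix i y assume i: "i > N" and y: "y \<in> Bdelta F \<delta> \<inter> Xcl pts F (w i)"
    have wi: "\<And>a. 0 < w i $ a" by (rule w_pos)
    have ys: "y \<in> simplex_face F" and yd: "\<And>f. f \<in> F \<Longrightarrow> \<delta> \<le> y$f"
      using y unfolding Bdelta_def by auto
    have ycl: "y \<in> closure (range (Zf pts F (w i)))"
      using y unfolding Xcl_def Xo_eq by simp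
    obtain f0 where f0: "f0 \<in> F" using Fne by blast
    have "y \<in> range (Zf pts F (w i))"
      by (rule closure_Z[OF f0 wi ycl ys]) (use yd delta_pos in \<open>auto intro: less_le_trans\<close>)
    then obtain \<xi> where y\<xi>: "y = Zf pts F (w i) \<xi>" by blast
    define z0 where "z0 = Zf pts UNIV (w i) \<xi>"
    have z0X: "z0 \<in> Xo pts UNIV (w i)" unfolding z0_def Xo_eq by simp
    have z0p: "proj_face F z0 = y" unfolding z0_def y\<xi> by (rule proj_Z[OF Fne wi])
    have uniq: "z = z0" if z: "z \<in> Xo pts UNIV (w i)" "proj_face F z = y" for z
    proof -
      obtain \<xi>' where z': "z = Zf pts UNIV (w i) \<xi>'" using z(1) unfolding Xo_eq by blast
      have "Zf pts F (w i) \<xi>' = Zf pts F (w i) \<xi>"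
        using z(2) proj_Z[OF Fne wi, of pts \<xi>'] y\<xi> z' by simp
      then show ?thesis unfolding z' z0_def by (rule Z_eq[OF inj_pts cb(3) wi])
    qed
    have dist: "l1dist y z0 < \<epsilon>"
    proof -
      define T where "T = (\<Sum>f\<in>F. w i $ f * exp (pts f \<bullet> \<xi>))"
      have "l1dist y z0 \<le> 2 * (\<Sum>a\<in>-F. w i $ a * exp (pts a \<bullet> \<xi>) / T)"
        unfolding y\<xi> z0_def T_def by (rule dist_Z[OF Fne wi])
      also have "\<dots> \<le> 2 * (\<Sum>a\<in>-F. tgt)"
      proof -
        have "w i $ a * exp (pts a \<bullet> \<xi>) / T \<le> tgt" if a: "a \<in> -F" for a
        proof -
          have "w i $ a * exp (pts a \<bullet> \<xi>) / T
              \<le> exp ((ln (w i $ a) - (\<Sum>f\<in>F. U a f * ln (w i $ f))) + (\<Sum>f\<in>F. \<bar>U a f\<bar>) * \<bar>ln \<delta>\<bar>)"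
            unfolding T_def
            by (rule ratio_bound[OF Fne wi U(1) U(2) delta_pos]) (use yd y\<xi> in simp)
          also have "\<dots> = exp (gv a \<bullet> v i + Kd a)"
            by (simp add: gv_eval v_def Kd_def)
          also have "\<dots> \<le> tgt" by (rule small[OF a i])
          finally show ?thesis .
        qed
        then show ?thesis by (intro mult_left_mono sum_mono) auto
      qed
      also have "\<dots> = 2 * real n * tgt" by (simp add: n_def)
      also have "\<dots> < \<epsilon>"
      proof -
        have "2 * real n * tgt = \<epsilon> * (2 * real n / (4 * (real n + 1)))"
          unfolding tgt_def by (simp add: field_simps)
        also have "\<dots> < \<epsilon> * 1"
          by (rule mult_strict_left_mono) (use eps_pos in \<open>auto simp: field_simps\<close>)
        finally show ?thesis by simp
      qed
      finally show ?thesis .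
    qed
    show "(\<exists>!z. z \<in> Xo pts UNIV (w i) \<and> proj_face F z = y) \<and>
          (\<forall>z. z \<in> Xo pts UNIV (w i) \<and> proj_face F z = y \<longrightarrow> l1dist y z < \<epsilon>)"
    proof
      show "\<exists>!z. z \<in> Xo pts UNIV (w i) \<and> proj_face F z = y"
      proof (rule ex1I[of _ z0])
        show "z0 \<in> Xo pts UNIV (w i) \<and> proj_face F z0 = y" using z0X z0p by simp
        fix z assume "z \<in> Xo pts UNIV (w i) \<and> proj_face F z = y"
        then show "z = z0" using uniq by blast
      qed
      show "\<forall>z. z \<in> Xo pts UNIV (w i) \<and> proj_face F z = y \<longrightarrow> l1dist y z < \<epsilon>"
        using uniq dist by blast
    qed
  qed
  then show ?thesis by (rule exI)
qed

end
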